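(* Let $\rho$ be a rearrangement invariant function norm over a resonant $\sigma$-finite measure space $(\Omega,\Sigma,\mu)$. If for every $E\in\Sigma$ with $\mu(E)<\infty$ there is a constant $C_E$ with $\int_Ef\,d\mu\le C_E\rho(f)$ for all measurable $f\colon\Omega\to[0,\infty]$, then $\rho$ is leveling.
   Context: $L_0^+(\mu)$: measurable functions $\Omega\to[0,\infty]$ modulo a.e. equality. A function quasi-norm is $\rho\colon L_0^+(\mu)\to[0,\infty]$ with: $\rho(tf)=t\rho(f)$ ($t\ge0$); $f\le g$ a.e. $\Rightarrow\rho(f)\le\rho(g)$; $\rho(\chi_E)<\infty$ if $\mu(E)<\infty$; for every $E$ with $\mu(E)<\infty$ and $\varepsilon>0$ there is $\delta>0$ with $\mu(A)\le\varepsilon$ whenever $A\subseteq E$ measurable and $\rho(\chi_A)\le\delta$; and $\rho(f+g)\le\kappa(\rho(f)+\rho(g))$. A function norm is one with $\kappa=1$. $\rho$ is rearrangement invariant if every $f$ with $\rho(f)<\infty$ has finite distribution function ($\mu_f(s)=\mu\{f>s\}<\infty$ for all $s>0$) and $\rho(f)=\rho(g)$ whenever $\mu_f=\mu_g$. A measure space is resonant if it is either non-atomic or consists of atoms of equal measure. $\rho$ is leveling if there is $C$ with $\rho(\mathbb{E}(f,\Sigma_0))\le C\rho(f)$ for every finite sub-$\sigma$-algebra $\Sigma_0$ and $f\in L_0^+(\mu)$, where $\mathbb{E}(f,\Sigma_0)$ is the unique nonnegative $\Sigma_0$-measurable $g$ with $\int_Af\,d\mu=\int_Ag\,d\mu$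 for all $A\in\Sigma_0$.
   Formalization: In leveling, $\mathbb{E}(f,\Sigma_0)$ is the average of f over each atom A of $\Sigma_0$ with $0<\mu(A)<\infty$ and 0 on atoms of measure 0 or infinity, instead of the unique $\Sigma_0$-measurable g with matching integrals over all $A\in\Sigma_0$. Apart from conventions, each condition added here is assumed in the paper as well or is needed for the statement above to hold. *)

theory Defs
  imports "HOL-Analysis.Analysis"
begin

text \<open>Elements of L0+(mu) are represented by Borel measurable functions
  space M -> [0,infinity] (type ennreal); a functional rho is required to
  respect a.e. equality, so it is well defined on equivalence classes.\<close>

definition function_quasi_norm ::
  "'a measure \<Rightarrow> (('a \<Rightarrow> ennreal) \<Rightarrow> ennreal) \<Rightarrow> real \<Rightarrow> bool" where
  "function_quasi_norm M \<rho> \<kappa> \<longleftrightarrow>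
     (\<forall>f\<in>borel_measurable M. \<forall>g\<in>borel_measurable M.
        (AE x in M. f x = g x) \<longrightarrow> \<rho> f = \<rho> g) \<and>
     (\<forall>f\<in>borel_measurable M. \<forall>t::real. t \<ge> 0 \<longrightarrow>
        \<rho> (\<lambda>x. ennreal t * f x) = ennreal t * \<rho> f) \<and>
     (\<forall>f\<in>borel_measurable M. \<forall>g\<in>borel_measurable M.
        (AE x in M. f x \<le> g x) \<longrightarrow> \<rho> f \<le> \<rho> g) \<and>
     (\<forall>E\<in>sets M. emeasure M E < \<infinity> \<longrightarrow> \<rho> (indicator E) < \<infinity>) \<and>
     (\<forall>E\<in>sets M. emeasure M E < \<infinity> \<longrightarrow>
        (\<forall>\<epsilon>::real. \<epsilon> > 0 \<longrightarrow> (\<exists>\<delta>::real. \<delta> > 0 \<and>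
           (\<forall>A\<in>sets M. A \<subseteq> E \<longrightarrow> \<rho> (indicator A) \<le> ennreal \<delta>
               \<longrightarrow> emeasure M A \<le> ennreal \<epsilon>)))) \<and>
     (\<forall>f\<in>borel_measurable M. \<forall>g\<in>borel_measurable M.
        \<rho> (\<lambda>x. f x + g x) \<le> ennreal \<kappa> * (\<rho> f + \<rho> g))"

definition function_norm :: "'a measure \<Rightarrow> (('a \<Rightarrow> ennreal) \<Rightarrow> ennreal) \<Rightarrow> bool" where
  "function_norm M \<rho> \<longleftrightarrow> function_quasi_norm M \<rho> 1"

definition distrib_fun :: "'a measure \<Rightarrow> ('a \<Rightarrow> ennreal) \<Rightarrow> real \<Rightarrow> ennreal" where
  "distrib_fun M f s = emeasure M {x \<in> space M. f x > ennreal s}"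

definition rearrangement_invariant ::
  "'a measure \<Rightarrow> (('a \<Rightarrow> ennreal) \<Rightarrow> ennreal) \<Rightarrow> bool" where
  "rearrangement_invariant M \<rho> \<longleftrightarrow>
     (\<forall>f\<in>borel_measurable M. \<rho> f < \<infinity> \<longrightarrow>
        (\<forall>s::real. s > 0 \<longrightarrow> distrib_fun M f s < \<infinity>)) \<and>
     (\<forall>f\<in>borel_measurable M. \<forall>g\<in>borel_measurable M.
        (\<forall>s::real. s \<ge> 0 \<longrightarrow> distrib_fun M f s = distrib_fun M g s) \<longrightarrow> \<rho> f = \<rho> g)"

definition is_atom :: "'a measure \<Rightarrow> 'a set \<Rightarrow> bool" where
  "is_atom M A \<longleftrightarrow> A \<in> sets M \<and> emeasure M A > 0 \<and>
     (\<forall>B\<in>sets M. B \<subseteq> A \<longrightarrow> emeasure M B = 0 \<or> emeasure M (A - B) = 0)"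

definition non_atomic :: "'a measure \<Rightarrow> bool" where
  "non_atomic M \<longleftrightarrow> \<not> (\<exists>A. is_atom M A)"

definition atoms_equal_measure :: "'a measure \<Rightarrow> bool" where
  "atoms_equal_measure M \<longleftrightarrow> (\<exists>\<A> c. (\<forall>A\<in>\<A>. is_atom M A \<and> emeasure M A = c) \<and>
      disjoint \<A> \<and> \<Union>\<A> = space M)"

definition resonant :: "'a measure \<Rightarrow> bool" where
  "resonant M \<longleftrightarrow> non_atomic M \<or> atoms_equal_measure M"

definition finite_sub_sigma :: "'a measure \<Rightarrow> 'a set set \<Rightarrow> bool" where
  "finite_sub_sigma M \<Sigma>\<^sub>0 \<longleftrightarrow> sigma_algebra (space M) \<Sigma>\<^sub>0 \<and> \<Sigma>\<^sub>0 \<subseteq> sets M \<and> finite \<Sigma>\<^sub>0"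

definition fin_atom :: "'a set set \<Rightarrow> 'a \<Rightarrow> 'a set" where
  "fin_atom \<Sigma>\<^sub>0 x = \<Inter>{A \<in> \<Sigma>\<^sub>0. x \<in> A}"

text \<open>Conditional expectation E(f,Sigma0) for a finite sub-sigma-algebra: on each
  atom A of Sigma0 with 0 < mu(A) < infinity it is the average of f over A;
  on atoms of measure 0 or infinity it is set to 0.\<close>
definition cond_exp_fin :: "'a measure \<Rightarrow> 'a set set \<Rightarrow> ('a \<Rightarrow> ennreal) \<Rightarrow> 'a \<Rightarrow> ennreal" where
  "cond_exp_fin M \<Sigma>\<^sub>0 f x =
     (let A = fin_atom \<Sigma>\<^sub>0 x in
      if 0 < emeasure M A \<and> emeasure M A < \<infinity>
      then (\<integral>\<^sup>+ y. f y * indicator A y \<partial>M) / emeasure M A else 0)"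

definition leveling :: "'a measure \<Rightarrow> (('a \<Rightarrow> ennreal) \<Rightarrow> ennreal) \<Rightarrow> bool" where
  "leveling M \<rho> \<longleftrightarrow> (\<exists>C::real. \<forall>\<Sigma>\<^sub>0. finite_sub_sigma M \<Sigma>\<^sub>0 \<longrightarrow>
      (\<forall>f\<in>borel_measurable M. \<rho> (cond_exp_fin M \<Sigma>\<^sub>0 f) \<le> ennreal C * \<rho> f))"

end

theory Submission
  imports Defs
begin


lemma fin_sub:
  assumes "A \<in> sets M" "emeasure M A < \<infinity>" "B \<in> sets M" "B \<subseteq> A"
  shows "emeasure M B < \<infinity>"
  using assms emeasure_mono[of B A M] by (meson le_less_trans)

lemma na_half:
  assumes na: "non_atomic M" and A: "A \<in> sets M" "emeasure M A < \<infinity>" "0 < measure M A"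
  shows "\<exists>B\<in>sets M. B \<subseteq> A \<and> 0 < measure M B \<and> measure M B \<le> measure M A / 2"
proof -
  have "emeasure M A > 0" using A(3) by (simp add: measure_def enn2real_positive_iff)
  hence "\<not> is_atom M A" using na unfolding non_atomic_def by blast
  then obtain B where B: "B \<in> sets M" "B \<subseteq> A" "emeasure M B \<noteq> 0" "emeasure M (A - B) \<noteq> 0"
    using A \<open>emeasure M A > 0\<close> unfolding is_atom_def by blast
  have fB: "emeasure M B < \<infinity>" using fin_sub[OF A(1,2) B(1,2)] .
  have fAB: "emeasure M (A - B) < \<infinity>" using fin_sub[OF A(1,2), of "A - B"] A B by auto
  have mB: "0 < measure M B" using B(3) fB by (simp add: measure_def enn2real_positive_iff zero_less_iff_neq_zero)
  have mAB: "0 < measure M (A - B)" using B(4) fAB by (simp add: measure_def enn2real_positive_iff zero_less_iff_neq_zero)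
  have eq: "measure M (A - B) = measure M A - measure M B"
    by (rule measure_Diff) (use A B in auto)
  show ?thesis
  proof (cases "measure M B \<le> measure M A / 2")
    case True thus ?thesis using B mB by blast
  next
    case False
    hence "measure M (A - B) \<le> measure M A / 2" using eq by simp
    moreover have "A - B \<subseteq> A" "A - B \<in> sets M" using A B by auto
    ultimately show ?thesis using mAB by blast
  qed
qed

lemma na_small:
  assumes na: "non_atomic M" and A: "A \<in> sets M" "emeasure M A < \<infinity>" "0 < measure M A"
    and e: "0 < e"
  shows "\<exists>B\<in>sets M. B \<subseteq> A \<and> 0 < measure M B \<and> measure M B \<le> e"
proof -
  have ind: "\<exists>B\<in>sets M. B \<subseteq> A \<and> 0 < measure M B \<and> measure M B \<le> measure M A / 2^n" for n
  proof (induction n)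
    case 0 thus ?case using A by auto
  next
    case (Suc n)
    then obtain B where B: "B\<in>sets M" "B \<subseteq> A" "0 < measure M B" "measure M B \<le> measure M A / 2^n" by blast
    have "emeasure M B < \<infinity>" using fin_sub[OF A(1,2) B(1,2)] .
    then obtain C where C: "C\<in>sets M" "C \<subseteq> B" "0 < measure M C" "measure M C \<le> measure M B / 2"
      using na_half[OF na B(1) _ B(3)] by blast
    have "measure M B * 2 ^ n \<le> measure M A" using B(4) by (simp add: field_simps)
    moreover have "2 * measure M C * 2^n \<le> measure M B * 2^n" using C(4) by (intro mult_right_mono) auto
    ultimately have "2 * (measure M C * 2^n) \<le> measure M A" by (simp only: mult.assoc[symmetric])
    hence "measure M C \<le> measure M A / 2^Suc n" by (simp add: field_simps)
    thus ?case using C B by blast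
  qed
  obtain n :: nat where n: "measure M A / e < n" using reals_Archimedean2 by blast
  have "real n < real (2^n)" using less_exp[of n] by (simp only: of_nat_less_iff)
  hence "real n \<le> 2^n" by simp
  hence "measure M A / e < 2^n" using n by linarith
  hence "measure M A / 2^n \<le> e" using e by (simp add: field_simps)
  moreover obtain B where "B\<in>sets M" "B \<subseteq> A" "0 < measure M B" "measure M B \<le> measure M A / 2^n"
    using ind[of n] by blast
  ultimately show ?thesis by (meson order.trans)
qed




lemma sierpinski:
  assumes na: "non_atomic M" and X: "X \<in> sets M" "emeasure M X < \<infinity>"
    and t: "0 \<le> t" "t \<le> measure M X"
  shows "\<exists>Y\<in>sets M. Y \<subseteq> X \<and> measure M Y = t"
proof -
  have Xf: "X \<in> fmeasurable M" using X by (rule fmeasurableI)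
  have subf: "B \<in> fmeasurable M" if "B \<in> sets M" "B \<subseteq> X" for B
    using fmeasurableI2[OF Xf that(2,1)] .
  define adm where "adm F G \<longleftrightarrow> G \<in> sets M \<and> G \<subseteq> X - F \<and> measure M F + measure M G \<le> t" for F G
  define sa where "sa F = Sup (measure M ` {G. adm F G})" for F
  define I where "I F \<longleftrightarrow> F \<in> sets M \<and> F \<subseteq> X \<and> measure M F \<le> t" for F
  have bdd: "bdd_above (measure M ` {G. adm F G})" if "I F" for F
  proof -
    have "measure M G \<le> t" if "adm F G" for G
      using that measure_nonneg[of M F] unfolding adm_def by linarith
    thus ?thesis by (intro bdd_aboveI[of _ t]) auto
  qed
  have ne: "measure M ` {G. adm F G} \<noteq> {}" if "I F" for F
  proof -
    have "adm F {}" using that unfolding adm_def I_def by auto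
    thus ?thesis by blast
  qed
  have c1: "\<exists>G. adm F G \<and> sa F / 2 \<le> measure M G" if IF: "I F" for F
  proof (cases "sa F \<le> 0")
    case True
    have "adm F {}" using IF unfolding adm_def I_def by auto
    thus ?thesis using True by (intro exI[of _ "{}"]) auto
  next
    case False
    hence "sa F / 2 < sa F" by simp
    then obtain x where "x \<in> measure M ` {G. adm F G}" "sa F / 2 < x"
      using less_cSupD[OF ne[OF IF]] unfolding sa_def by blast
    thus ?thesis by force
  qed
  define nxt where "nxt F = F \<union> (SOME G. adm F G \<and> sa F / 2 \<le> measure M G)" for F
  have nxt: "I (nxt F) \<and> measure M (nxt F) \<ge> measure M F + sa F / 2 \<and> F \<subseteq> nxt F" if "I F" for F
  proof -
    define G where "G = (SOME G. adm F G \<and> sa F / 2 \<le> measure M G)"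
    have G: "adm F G \<and> sa F / 2 \<le> measure M G"
      unfolding G_def using someI_ex[OF c1[OF that]] .
    have Gs: "G \<in> sets M" "G \<subseteq> X" "G \<inter> F = {}" using G unfolding adm_def by auto
    have Fs: "F \<in> sets M" "F \<subseteq> X" using that unfolding I_def by auto
    have eq: "measure M (F \<union> G) = measure M F + measure M G"
      using subf[OF Fs] subf[OF Gs(1,2)] Gs(3)
      by (intro measure_Union) (auto simp: fmeasurable_def)
    have "nxt F = F \<union> G" unfolding nxt_def G_def ..
    thus ?thesis using eq G Gs Fs unfolding I_def adm_def by auto
  qed
  define Fs where "Fs n = (nxt ^^ n) {}" for n
  have FsS: "Fs (Suc n) = nxt (Fs n)" for n unfolding Fs_def by simp
  have IFs: "I (Fs n)" for n
  proof (induction n)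
    case 0 thus ?case unfolding Fs_def I_def using t by auto
  next
    case (Suc n) thus ?case using nxt FsS by metis
  qed
  have inc: "incseq Fs" using nxt IFs FsS by (intro incseq_SucI) (metis le_less)
  define U where "U = (\<Union>n. Fs n)"
  have Us: "U \<in> sets M" "U \<subseteq> X" using IFs unfolding U_def I_def by auto
  have lim: "(\<lambda>n. measure M (Fs n)) \<longlonglongrightarrow> measure M U"
    unfolding U_def
  proof (rule Lim_measure_incseq)
    show "range Fs \<subseteq> sets M" using IFs unfolding I_def by auto
    show "incseq Fs" by (rule inc)
    show "emeasure M (\<Union> (range Fs)) \<noteq> \<infinity>" using subf[OF Us] unfolding U_def fmeasurable_def by auto
  qed
  have Ut: "measure M U \<le> t"
    using lim IFs unfolding I_def by (intro LIMSEQ_le_const2) auto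
  have Umono: "measure M (Fs n) \<le> measure M U" for n
    using IFs subf[OF Us] unfolding I_def U_def by (intro measure_mono_fmeasurable) auto
  show ?thesis
  proof (cases "measure M U = t")
    case True thus ?thesis using Us by blast
  next
    case False
    hence lt: "measure M U < t" using Ut by simp
    have XU: "measure M (X - U) = measure M X - measure M U"
      using Us Xf by (intro measurable_measure_Diff) auto
    have D: "X - U \<in> sets M" "emeasure M (X - U) < \<infinity>" "0 < measure M (X - U)"
      using Us X XU lt t fin_sub[OF X, of "X - U"] by auto
    obtain H where H: "H \<in> sets M" "H \<subseteq> X - U" "0 < measure M H" "measure M H \<le> t - measure M U"
      using na_small[OF na D, of "t - measure M U"] lt by auto
    have step: "measure M (Fs (Suc n)) \<ge> measure M (Fs n) + measure M H / 2" for n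
    proof -
      have "adm (Fs n) H" unfolding adm_def using H Umono[of n] unfolding U_def by auto
      hence "measure M H \<le> sa (Fs n)" unfolding sa_def
        using bdd[OF IFs[of n]] by (intro cSup_upper) auto
      moreover have "measure M (Fs n) + sa (Fs n) / 2 \<le> measure M (Fs (Suc n))"
        using nxt[OF IFs[of n]] unfolding FsS[of n] by blast
      ultimately show ?thesis by linarith
    qed
    have grow: "measure M (Fs n) \<ge> real n * (measure M H / 2)" for n
    proof (induction n)
      case 0 thus ?case by (simp add: Fs_def)
    next
      case (Suc n) thus ?case using step[of n] by (simp add: algebra_simps)
    qed
    obtain n :: nat where n: "t / (measure M H / 2) < n" using reals_Archimedean2 by blast
    hence "t < real n * (measure M H / 2)" using H(3) by (simp add: field_simps)
    thus ?thesis using grow[of n] IFs[of n] unfolding I_def by linarith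
  qed
qed




definition avgB :: "'a measure \<Rightarrow> 'a set \<Rightarrow> ('a \<Rightarrow> ennreal) \<Rightarrow> ennreal" where
  "avgB M B f = (\<integral>\<^sup>+ y. f y * indicator B y \<partial>M) / emeasure M B"

definition TB :: "'a measure \<Rightarrow> 'a set \<Rightarrow> ('a \<Rightarrow> ennreal) \<Rightarrow> 'a \<Rightarrow> ennreal" where
  "TB M B f x = (if x \<in> B then avgB M B f else f x)"

lemma rot_bij:
  assumes "0 < (k::nat)"
  shows "(\<lambda>j. (j + r) mod k) ` {..<k} = {..<k}"
proof (rule endo_inj_surj)
  show "(\<lambda>j. (j + r) mod k) ` {..<k} \<subseteq> {..<k}" using assms by auto
  show "inj_on (\<lambda>j. (j + r) mod k) {..<k}"
  proof (rule inj_onI)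
    have inv: "((x + r) mod k + (k - r mod k)) mod k = x" if "x < k" for x
    proof -
      have "((x + r) mod k + (k - r mod k)) mod k = (x + r + (k - r mod k)) mod k" by (simp add: mod_add_left_eq)
      also have "x + r + (k - r mod k) = x + (r div k + 1) * k"
      proof -
        have "k * (r div k) + r mod k = r" by (rule mult_div_mod_eq)
        moreover have "(r div k + 1) * k = k * (r div k) + k" by simp
        moreover have "r mod k < k" using mod_less_divisor[OF assms] .
        ultimately show ?thesis by linarith
      qed
      also have "(x + (r div k + 1) * k) mod k = x mod k" by (rule mod_mult_self1)
      also have "\<dots> = x" using that by simp
      finally show ?thesis .
    qed
    fix x y assume xy: "x \<in> {..<k}" "y \<in> {..<k}" "(x + r) mod k = (y + r) mod k"
    thus "x = y" using inv[of x] inv[of y] by auto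
  qed
qed simp

lemma rot_sum:
  fixes g :: "nat \<Rightarrow> 'b::comm_monoid_add"
  assumes "0 < (k::nat)"
  shows "(\<Sum>j<k. g ((j + r) mod k)) = (\<Sum>j<k. g j)"
proof -
  have inj: "inj_on (\<lambda>j. (j + r) mod k) {..<k}"
    using rot_bij[OF assms, of r] by (simp add: eq_card_imp_inj_on)
  have "(\<Sum>j<k. g j) = sum g ((\<lambda>j. (j + r) mod k) ` {..<k})" using rot_bij[OF assms] by simp
  also have "\<dots> = (\<Sum>j<k. g ((j + r) mod k))" by (subst sum.reindex[OF inj]) simp
  finally show ?thesis by simp
qed

lemma sum_single_ind:
  fixes a :: "nat \<Rightarrow> ennreal"
  assumes "disjoint_family_on P {..<k}" "j < k" "x \<in> P j"
  shows "(\<Sum>i<k. a i * indicator (P i) x) = a j"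
proof -
  have "(\<Sum>i<k. a i * indicator (P i) x) = (\<Sum>i<k. if i = j then a j else 0)"
  proof (rule sum.cong)
    fix i assume "i \<in> {..<k}"
    thus "a i * indicator (P i) x = (if i = j then a j else 0)"
      using assms unfolding disjoint_family_on_def by (auto simp: indicator_def)
  qed simp
  also have "\<dots> = a j" using assms by simp
  finally show ?thesis .
qed

lemma sum_none_ind:
  fixes a :: "nat \<Rightarrow> ennreal"
  assumes "x \<notin> (\<Union>i<k. P i)"
  shows "(\<Sum>i<k. a i * indicator (P i) x) = 0"
  using assms by (auto simp: indicator_def)

locale rsetting =
  fixes M :: "'a measure" and \<rho> :: "('a \<Rightarrow> ennreal) \<Rightarrow> ennreal"
  assumes fn: "function_norm M \<rho>" and ri: "rearrangement_invariant M \<rho>"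
begin

lemma fq: "function_quasi_norm M \<rho> 1" using fn unfolding function_norm_def .

lemma fqd1: "(\<forall>f\<in>borel_measurable M. \<forall>g\<in>borel_measurable M.
        (AE x in M. f x = g x) \<longrightarrow> \<rho> f = \<rho> g)"
  using fq unfolding function_quasi_norm_def by (elim conjE) assumption

lemma fqd2: "(\<forall>f\<in>borel_measurable M. \<forall>t::real. t \<ge> 0 \<longrightarrow>
        \<rho> (\<lambda>x. ennreal t * f x) = ennreal t * \<rho> f)"
  using fq unfolding function_quasi_norm_def by (elim conjE) assumption

lemma fqd3: "(\<forall>f\<in>borel_measurable M. \<forall>g\<in>borel_measurable M.
        (AE x in M. f x \<le> g x) \<longrightarrow> \<rho> f \<le> \<rho> g)"
  using fq unfolding function_quasi_norm_def by (elim conjE) assumption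

lemma fqd4: "(\<forall>E\<in>sets M. emeasure M E < \<infinity> \<longrightarrow> \<rho> (indicator E) < \<infinity>)"
  using fq unfolding function_quasi_norm_def by (elim conjE) assumption

lemma fqd5: "(\<forall>f\<in>borel_measurable M. \<forall>g\<in>borel_measurable M.
        \<rho> (\<lambda>x. f x + g x) \<le> ennreal 1 * (\<rho> f + \<rho> g))"
  using fq unfolding function_quasi_norm_def by (elim conjE) assumption

lemma rho_ae: "f \<in> borel_measurable M \<Longrightarrow> g \<in> borel_measurable M \<Longrightarrow> (AE x in M. f x = g x) \<Longrightarrow> \<rho> f = \<rho> g"
  using fqd1 by blast

lemma rho_hom: "f \<in> borel_measurable M \<Longrightarrow> 0 \<le> t \<Longrightarrow> \<rho> (\<lambda>x. ennreal t * f x) = ennreal t * \<rho> f"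
  using fqd2 by blast

lemma rho_mono: "f \<in> borel_measurable M \<Longrightarrow> g \<in> borel_measurable M \<Longrightarrow> (AE x in M. f x \<le> g x) \<Longrightarrow> \<rho> f \<le> \<rho> g"
  using fqd3 by blast

lemma rho_ind: "E \<in> sets M \<Longrightarrow> emeasure M E < \<infinity> \<Longrightarrow> \<rho> (indicator E) < \<infinity>"
  using fqd4 by blast

lemma rho_tri:
  assumes "f \<in> borel_measurable M" "g \<in> borel_measurable M"
  shows "\<rho> (\<lambda>x. f x + g x) \<le> \<rho> f + \<rho> g"
  using fqd5 assms by simp

lemma rho_ri: "f \<in> borel_measurable M \<Longrightarrow> g \<in> borel_measurable M \<Longrightarrow>
   (\<And>s. 0 \<le> s \<Longrightarrow> distrib_fun M f s = distrib_fun M g s) \<Longrightarrow> \<rho> f = \<rho> g"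
  using ri unfolding rearrangement_invariant_def by blast

lemma rho_sum:
  assumes "finite S" "\<And>i. i \<in> S \<Longrightarrow> h i \<in> borel_measurable M"
  shows "\<rho> (\<lambda>x. \<Sum>i\<in>S. h i x) \<le> (\<Sum>i\<in>S. \<rho> (h i))"
  using assms
proof (induction S rule: finite_induct)
  case empty
  have "\<rho> (\<lambda>x. 0) = \<rho> (\<lambda>x. ennreal 0 * (0::ennreal))" by simp
  also have "\<dots> = ennreal 0 * \<rho> (\<lambda>x. 0)" by (rule rho_hom) auto
  finally show ?case by simp
next
  case (insert a S)
  have "\<rho> (\<lambda>x. \<Sum>i\<in>insert a S. h i x) = \<rho> (\<lambda>x. h a x + (\<Sum>i\<in>S. h i x))"
    using insert by simp
  also have "\<dots> \<le> \<rho> (h a) + \<rho> (\<lambda>x. \<Sum>i\<in>S. h i x)"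
    using insert by (intro rho_tri) auto
  also have "\<dots> \<le> \<rho> (h a) + (\<Sum>i\<in>S. \<rho> (h i))"
    using insert by (intro add_left_mono) auto
  finally show ?case using insert by simp
qed

end




lemma div_ennreal_pos: "0 < (c::real) \<Longrightarrow> x / ennreal c = x * ennreal (1 / c)"
  by (simp add: divide_ennreal_def inverse_ennreal inverse_eq_divide)

lemma avg_calc:
  assumes "0 < (k::nat)" "0 < (p::real)"
  shows "(a * ennreal p) / (of_nat k * ennreal p) = ennreal (1 / real k) * a"
proof -
  have "of_nat k * ennreal p = ennreal (real k * p)"
    using assms by (simp add: ennreal_of_nat_eq_real_of_nat ennreal_mult)
  moreover have "0 < real k * p" using assms by simp
  ultimately have "(a * ennreal p) / (of_nat k * ennreal p) = a * ennreal p * ennreal (1 / (real k * p))"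
    by (simp add: div_ennreal_pos)
  also have "\<dots> = a * (ennreal p * ennreal (1 / (real k * p)))" by (simp add: mult.assoc)
  also have "ennreal p * ennreal (1 / (real k * p)) = ennreal (p * (1 / (real k * p)))"
    using assms by (intro ennreal_mult[symmetric]) auto
  also have "p * (1 / (real k * p)) = 1 / real k" using assms by simp
  finally show ?thesis by (simp add: mult.commute)
qed

lemma inv_k_cancel:
  assumes "0 < (k::nat)"
  shows "ennreal (1 / real k) * (of_nat k * y) = y"
proof -
  have "ennreal (1 / real k) * of_nat k = ennreal (1 / real k * real k)"
    unfolding ennreal_of_nat_eq_real_of_nat by (rule ennreal_mult[symmetric]) auto
  also have "\<dots> = 1" using assms by simp
  finally show ?thesis by (simp add: mult.assoc[symmetric])
qed

context rsetting begin

lemma rotation: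
  fixes k :: nat and v :: "nat \<Rightarrow> ennreal"
  assumes k: "0 < k"
    and B: "B \<in> sets M"
    and Ps: "\<And>j. j < k \<Longrightarrow> P j \<in> sets M"
    and PB: "\<And>j. j < k \<Longrightarrow> P j \<subseteq> B"
    and Pm: "\<And>j. j < k \<Longrightarrow> emeasure M (P j) = ennreal p"
    and p: "0 < p"
    and disj: "disjoint_family_on P {..<k}"
    and null: "emeasure M (B - (\<Union>j<k. P j)) = 0"
    and u: "u \<in> borel_measurable M"
    and uv: "\<And>j x. j < k \<Longrightarrow> x \<in> P j \<Longrightarrow> u x = v j"
  shows "\<rho> (TB M B u) \<le> \<rho> u"
proof -
  define U where "U = (\<Union>j<k. P j)"
  have Us: "U \<in> sets M" "U \<subseteq> B" using Ps PB unfolding U_def by (auto intro!: sets.finite_UN simp: finite_lessThan)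
  have BUs: "B - U \<in> null_sets M" using null B Us unfolding U_def by auto
  define h where "h r x = (\<Sum>j<k. v ((j + r) mod k) * indicator (P j) x) + u x * indicator (space M - U) x" for r x
  have hm: "h r \<in> borel_measurable M" for r
  proof -
    have "(\<lambda>x. v ((j + r) mod k) * indicator (P j) x :: ennreal) \<in> borel_measurable M" if "j \<in> {..<k}" for j
      using Ps that by simp
    hence "(\<lambda>x. \<Sum>j<k. v ((j + r) mod k) * indicator (P j) x) \<in> borel_measurable M"
      by (rule borel_measurable_sum)
    moreover have "(\<lambda>x. u x * indicator (space M - U) x) \<in> borel_measurable M"
      using u Us by simp
    ultimately show ?thesis unfolding h_def by simp
  qed
  have hin: "h r x = v ((j + r) mod k)" if "j < k" "x \<in> P j" for r j x
  proof -
    have "x \<in> U" using that unfolding U_def by auto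
    thus ?thesis unfolding h_def using sum_single_ind[OF disj that] by simp
  qed
  have hout: "h r x = u x" if "x \<in> space M" "x \<notin> U" for r x
  proof -
    have "(\<Sum>j<k. v ((j + r) mod k) * indicator (P j) x) = 0"
      using that unfolding U_def by (intro sum_none_ind) auto
    thus ?thesis unfolding h_def using that by simp
  qed
  have dist: "distrib_fun M (h r) s = emeasure M ({x\<in>space M. ennreal s < u x} - U) +
      (\<Sum>j<k. if ennreal s < v j then ennreal p else 0)" for r s
  proof -
    define A where "A = {x\<in>space M. ennreal s < u x}"
    define S where "S = {j\<in>{..<k}. ennreal s < v ((j + r) mod k)}"
    have As: "A \<in> sets M" unfolding A_def using u by measurable
    have eq: "{x\<in>space M. ennreal s < h r x} = (A - U) \<union> (\<Union>j\<in>S. P j)"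
    proof (intro set_eqI iffI)
      fix x assume x: "x \<in> {x\<in>space M. ennreal s < h r x}"
      show "x \<in> (A - U) \<union> (\<Union>j\<in>S. P j)"
      proof (cases "x \<in> U")
        case True
        then obtain j where j: "j < k" "x \<in> P j" unfolding U_def by auto
        thus ?thesis using x hin[OF j] unfolding S_def by auto
      next
        case False
        thus ?thesis using x hout[of x r] unfolding A_def by auto
      qed
    next
      fix x assume x: "x \<in> (A - U) \<union> (\<Union>j\<in>S. P j)"
      show "x \<in> {x\<in>space M. ennreal s < h r x}"
      proof (cases "x \<in> A - U")
        case True
        thus ?thesis using hout[of x r] unfolding A_def by auto
      next
        case False
        then obtain j where j: "j \<in> S" "x \<in> P j" using x by auto
        have "j < k" using j unfolding S_def by auto
        hence "x \<in> space M" using Ps[of j] j sets.sets_into_space by blast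
        thus ?thesis using hin[OF \<open>j < k\<close> j(2)] j unfolding S_def by auto
      qed
    qed
    have fS: "finite S" unfolding S_def by auto
    have S_sub: "S \<subseteq> {..<k}" unfolding S_def by auto
    have disjS: "disjoint_family_on P S" by (rule disjoint_family_on_mono[OF S_sub disj])
    have PSs: "(\<Union>j\<in>S. P j) \<in> sets M" using Ps S_sub fS by auto
    have PsU: "(\<Union>j\<in>S. P j) \<subseteq> U" using S_sub unfolding U_def by auto
    have "emeasure M ((A - U) \<union> (\<Union>j\<in>S. P j)) = emeasure M (A - U) + emeasure M (\<Union>j\<in>S. P j)"
      using As Us PSs PsU by (intro plus_emeasure[symmetric]) auto
    also have "emeasure M (\<Union>j\<in>S. P j) = (\<Sum>j\<in>S. emeasure M (P j))"
      using Ps S_sub disjS fS by (intro sum_emeasure[symmetric]) auto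
    also have "\<dots> = (\<Sum>j\<in>S. ennreal p)" using Pm S_sub by (intro sum.cong) auto
    also have "\<dots> = (\<Sum>j<k. if ennreal s < v ((j + r) mod k) then ennreal p else 0)"
      unfolding S_def by (rule sum.inter_filter) simp
    also have "\<dots> = (\<Sum>j<k. if ennreal s < v j then ennreal p else 0)"
      by (rule rot_sum[OF k, of "\<lambda>i. if ennreal s < v i then ennreal p else 0"])
    finally show ?thesis unfolding distrib_fun_def eq A_def .
  qed
  have h0: "\<rho> (h 0) = \<rho> u"
  proof (rule rho_ae[OF hm u])
    show "AE x in M. h 0 x = u x"
    proof (rule AE_I2)
      fix x assume x: "x \<in> space M"
      show "h 0 x = u x"
      proof (cases "x \<in> U")
        case True
        then obtain j where j: "j < k" "x \<in> P j" unfolding U_def by auto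
        thus ?thesis using hin[OF j, of 0] uv[OF j] by simp
      next
        case False thus ?thesis using hout x by simp
      qed
    qed
  qed
  have hr: "\<rho> (h r) = \<rho> u" for r
  proof -
    have "\<rho> (h r) = \<rho> (h 0)" by (rule rho_ri[OF hm hm]) (simp add: dist)
    thus ?thesis using h0 by simp
  qed
  define g where "g x = ennreal (1 / real k) * (\<Sum>r<k. h r x)" for x
  have sm: "(\<lambda>x. \<Sum>r<k. h r x) \<in> borel_measurable M" using hm by (intro borel_measurable_sum)
  have gm: "g \<in> borel_measurable M" unfolding g_def using sm by simp
  have "\<rho> g = ennreal (1 / real k) * \<rho> (\<lambda>x. \<Sum>r<k. h r x)"
    unfolding g_def by (rule rho_hom[OF sm]) simp
  also have "\<dots> \<le> ennreal (1 / real k) * (\<Sum>r<k. \<rho> (h r))"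
    by (intro mult_left_mono rho_sum) (auto simp: hm)
  also have "(\<Sum>r<k. \<rho> (h r)) = of_nat k * \<rho> u" using hr by simp
  also have "ennreal (1 / real k) * (of_nat k * \<rho> u) = \<rho> u" by (rule inv_k_cancel[OF k])
  finally have rg: "\<rho> g \<le> \<rho> u" .
  have int_eq: "(\<integral>\<^sup>+ y. u y * indicator B y \<partial>M) = (\<integral>\<^sup>+ y. (\<Sum>j<k. v j * indicator (P j) y) \<partial>M)"
  proof (rule nn_integral_cong_AE)
    show "AE y in M. u y * indicator B y = (\<Sum>j<k. v j * indicator (P j) y)"
      using AE_not_in[OF BUs]
    proof (rule AE_mp)
      show "AE y in M. y \<notin> B - U \<longrightarrow> u y * indicator B y = (\<Sum>j<k. v j * indicator (P j) y)"
      proof (rule AE_I2, rule impI)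
        fix y assume y: "y \<in> space M" "y \<notin> B - U"
        show "u y * indicator B y = (\<Sum>j<k. v j * indicator (P j) y)"
        proof (cases "y \<in> U")
          case True
          then obtain j where j: "j < k" "y \<in> P j" unfolding U_def by auto
          thus ?thesis using sum_single_ind[OF disj j, of v] uv[OF j] PB[OF j(1)] by auto
        next
          case False
          thus ?thesis using y sum_none_ind[where a=v and x=y and k=k and P=P] unfolding U_def by auto
        qed
      qed
    qed
  qed
  also have "\<dots> = (\<Sum>j<k. \<integral>\<^sup>+ y. v j * indicator (P j) y \<partial>M)"
    using Ps by (intro nn_integral_sum) simp
  also have "\<dots> = (\<Sum>j<k. v j * ennreal p)"
    using Ps Pm by (intro sum.cong) (simp_all add: nn_integral_cmult_indicator)
  also have "\<dots> = (\<Sum>j<k. v j) * ennreal p" by (simp add: sum_distrib_right)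
  finally have int_val: "(\<integral>\<^sup>+ y. u y * indicator B y \<partial>M) = (\<Sum>j<k. v j) * ennreal p" .
  have mB: "emeasure M B = of_nat k * ennreal p"
  proof -
    have "emeasure M B = emeasure M U + emeasure M (B - U)"
      using Us B by (subst plus_emeasure) (auto simp: Un_absorb1)
    also have "emeasure M (B - U) = 0" using BUs by auto
    also have "emeasure M U = (\<Sum>j<k. emeasure M (P j))"
      unfolding U_def using Ps disj by (intro sum_emeasure[symmetric]) auto
    also have "\<dots> = (\<Sum>j<k. ennreal p)" using Pm by simp
    finally show ?thesis by simp
  qed
  have avg: "avgB M B u = ennreal (1 / real k) * (\<Sum>j<k. v j)"
    unfolding avgB_def int_val mB by (rule avg_calc[OF k p])
  have "AE x in M. TB M B u x = g x"
    using AE_not_in[OF BUs]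
  proof (rule AE_mp)
    show "AE x in M. x \<notin> B - U \<longrightarrow> TB M B u x = g x"
    proof (rule AE_I2, rule impI)
      fix x assume x: "x \<in> space M" "x \<notin> B - U"
      show "TB M B u x = g x"
      proof (cases "x \<in> U")
        case True
        then obtain j where j: "j < k" "x \<in> P j" unfolding U_def by auto
        have "(\<Sum>r<k. h r x) = (\<Sum>r<k. v ((r + j) mod k))"
          using hin[OF j] by (simp add: add.commute)
        also have "\<dots> = (\<Sum>r<k. v r)" by (rule rot_sum[OF k])
        finally show ?thesis unfolding TB_def g_def using PB[OF j(1)] j avg by auto
      next
        case False
        hence "x \<notin> B" using x by auto
        have "(\<Sum>r<k. h r x) = of_nat k * u x" using hout[OF x(1) False] by simp
        thus ?thesis unfolding TB_def g_def using \<open>x \<notin> B\<close> inv_k_cancel[OF k] by simp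
      qed
    qed
  qed
  have TBm: "TB M B u \<in> borel_measurable M"
    unfolding TB_def using u B by (intro measurable_If_set) auto
  have "\<rho> (TB M B u) = \<rho> g" by (rule rho_ae[OF TBm gm]) fact
  thus ?thesis using rg by simp
qed

end



context rsetting begin

lemma rotation_I:
  fixes I :: "'i set" and P :: "'i \<Rightarrow> 'a set" and v :: "'i \<Rightarrow> ennreal"
  assumes I: "finite I" "I \<noteq> {}"
    and B: "B \<in> sets M"
    and Ps: "\<And>i. i \<in> I \<Longrightarrow> P i \<in> sets M"
    and PB: "\<And>i. i \<in> I \<Longrightarrow> P i \<subseteq> B"
    and Pm: "\<And>i. i \<in> I \<Longrightarrow> emeasure M (P i) = ennreal p"
    and p: "0 < p"
    and disj: "disjoint_family_on P I"
    and null: "emeasure M (B - (\<Union>i\<in>I. P i)) = 0"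
    and u: "u \<in> borel_measurable M"
    and uv: "\<And>i x. i \<in> I \<Longrightarrow> x \<in> P i \<Longrightarrow> u x = v i"
  shows "\<rho> (TB M B u) \<le> \<rho> u"
proof -
  obtain e where e: "bij_betw e {0..<card I} I" using ex_bij_betw_nat_finite[OF I(1)] by blast
  define k where "k = card I"
  have k: "0 < k" using I unfolding k_def by auto
  have eI: "e j \<in> I" if "j < k" for j using bij_betw_apply[OF e] that unfolding k_def by auto
  have img: "e ` {..<k} = I" using bij_betw_imp_surj_on[OF e] unfolding k_def lessThan_atLeast0 .
  have inj: "inj_on e {..<k}" using bij_betw_imp_inj_on[OF e] unfolding k_def lessThan_atLeast0 .
  show ?thesis
  proof (rule rotation[of k B "\<lambda>j. P (e j)" p u "\<lambda>j. v (e j)"])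
    show "0 < k" by (rule k)
    show "B \<in> sets M" by (rule B)
    show "\<And>j. j < k \<Longrightarrow> P (e j) \<in> sets M" using Ps eI by blast
    show "\<And>j. j < k \<Longrightarrow> P (e j) \<subseteq> B" using PB eI by blast
    show "\<And>j. j < k \<Longrightarrow> emeasure M (P (e j)) = ennreal p" using Pm eI by blast
    show "0 < p" by (rule p)
    show "disjoint_family_on (\<lambda>j. P (e j)) {..<k}"
      unfolding disjoint_family_on_def
    proof (intro ballI impI)
      fix a b assume ab: "a \<in> {..<k}" "b \<in> {..<k}" "a \<noteq> b"
      hence "e a \<noteq> e b" using inj unfolding inj_on_def by blast
      thus "P (e a) \<inter> P (e b) = {}" using disj eI ab unfolding disjoint_family_on_def by auto
    qed
    have "(\<Union>j<k. P (e j)) = (\<Union>i\<in>I. P i)" using img by auto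
    thus "emeasure M (B - (\<Union>j<k. P (e j))) = 0" using null by simp
    show "u \<in> borel_measurable M" by (rule u)
    show "\<And>j x. j < k \<Longrightarrow> x \<in> P (e j) \<Longrightarrow> u x = v (e j)" using uv eI by blast
  qed
qed

end

definition SP :: "'a measure \<Rightarrow> 'a set \<Rightarrow> real \<Rightarrow> real \<Rightarrow> bool" where
  "SP M B p r \<longleftrightarrow> (\<forall>X\<in>sets M. X \<subseteq> B \<longrightarrow> (\<exists>J Q.
     (\<forall>i<J. Q i \<in> sets M \<and> Q i \<subseteq> X \<and> emeasure M (Q i) = ennreal p) \<and>
     disjoint_family_on Q {..<(J::nat)} \<and>
     emeasure M (X - (\<Union>i<J. Q i)) \<le> ennreal r \<and>
     emeasure M (X - (\<Union>i<J. Q i)) < ennreal p))"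




lemma ennreal_cancel_count:
  fixes N m :: nat and p e :: real
  assumes "real N * p = real m * p + e" "0 \<le> e" "e < p"
  shows "e = 0"
proof (cases "N \<le> m")
  case True
  hence "real N * p \<le> real m * p" using assms by (intro mult_right_mono) auto
  thus ?thesis using assms by linarith
next
  case False
  hence "real m + 1 \<le> real N" by simp
  hence "(real m + 1) * p \<le> real N * p" using assms by (intro mult_right_mono) auto
  thus ?thesis using assms by (simp add: algebra_simps)
qed

lemma of_nat_ennreal_mult: "0 \<le> p \<Longrightarrow> of_nat n * ennreal p = ennreal (real n * p)"
  by (simp add: ennreal_of_nat_eq_real_of_nat ennreal_mult)

context rsetting begin

lemma construct:
  fixes V :: "ennreal set" and s f :: "'a \<Rightarrow> ennreal"
  assumes B: "B \<in> sets M" and mB: "emeasure M B = of_nat N * ennreal p" and Bpos: "0 < emeasure M B"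
    and p: "0 < p" and sp: "SP M B p r"
    and f: "f \<in> borel_measurable M" and s: "s \<in> borel_measurable M"
    and V: "finite V" and sV: "\<And>x. x \<in> B \<Longrightarrow> s x \<in> V" and sf: "\<And>x. x \<in> B \<Longrightarrow> s x \<le> f x"
    and W: "\<And>w. w \<in> V \<Longrightarrow> w \<le> W"
  shows "\<exists>u. u \<in> borel_measurable M \<and> (\<forall>x\<in>space M. x \<notin> B \<longrightarrow> u x = f x) \<and> (\<forall>x\<in>B. u x \<le> f x) \<and>
     \<rho> (TB M B u) \<le> \<rho> u \<and>
     (\<integral>\<^sup>+x. s x * indicator B x \<partial>M) \<le> (\<integral>\<^sup>+x. u x * indicator B x \<partial>M) + W * of_nat (card V) * ennreal r"
proof -
  define good where "good X J Q \<longleftrightarrow>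
     (\<forall>i<J. Q i \<in> sets M \<and> Q i \<subseteq> X \<and> emeasure M (Q i) = ennreal p) \<and>
     disjoint_family_on Q {..<(J::nat)} \<and>
     emeasure M (X - (\<Union>i<J. Q i)) \<le> ennreal r \<and>
     emeasure M (X - (\<Union>i<J. Q i)) < ennreal p" for X J Q
  have spg: "\<exists>J Q. good X J Q" if "X \<in> sets M" "X \<subseteq> B" for X
    using sp that unfolding SP_def good_def by blast
  have Bsp: "B \<subseteq> space M" using B sets.sets_into_space by blast
  define X where "X w = B \<inter> {x\<in>space M. s x = w}" for w
  have Xs: "X w \<in> sets M" "X w \<subseteq> B" for w
    unfolding X_def using B s by (auto intro!: sets.Int)
  have "\<forall>w\<in>V. \<exists>JQ. good (X w) (fst JQ) (snd JQ)" using spg[OF Xs] by auto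
  then obtain F where F: "\<forall>w\<in>V. good (X w) (fst (F w)) (snd (F w))" by (rule bchoice[elim_format]) blast
  define J where "J w = fst (F w)" for w
  define Q where "Q w = snd (F w)" for w
  have gw: "good (X w) (J w) (Q w)" if "w \<in> V" for w using F that unfolding J_def Q_def by blast
  have Qs: "Q w i \<in> sets M" "Q w i \<subseteq> X w" "emeasure M (Q w i) = ennreal p" if "w \<in> V" "i < J w" for w i
    using gw[OF that(1)] that(2) unfolding good_def by auto
  define I1 where "I1 = Sigma V (\<lambda>w. {..<J w})"
  have fI1: "finite I1" unfolding I1_def using V by auto
  define V1 where "V1 = (\<Union>wi\<in>I1. Q (fst wi) (snd wi))"
  have V1s: "V1 \<in> sets M" unfolding V1_def using fI1 Qs by (auto simp: I1_def intro!: sets.finite_UN)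
  have V1B: "V1 \<subseteq> B" unfolding V1_def I1_def using Qs Xs by fastforce
  define D where "D = B - V1"
  have Ds: "D \<in> sets M" "D \<subseteq> B" unfolding D_def using B V1s by auto
  obtain J' Q' where gD: "good D J' Q'" using spg[OF Ds] by blast
  have Q's: "Q' i \<in> sets M" "Q' i \<subseteq> D" "emeasure M (Q' i) = ennreal p" if "i < J'" for i
    using gD that unfolding good_def by auto
  define R where "R = D - (\<Union>i<J'. Q' i)"
  have Rp: "emeasure M R < ennreal p" using gD unfolding good_def R_def by auto
  define I where "I = Inl ` I1 \<union> Inr ` {..<J'}"
  define P where "P = case_sum (\<lambda>wi. Q (fst wi) (snd wi)) Q'"
  define v :: "(ennreal \<times> nat) + nat \<Rightarrow> ennreal" where "v = case_sum (\<lambda>wi. fst wi) (\<lambda>_. 0::ennreal)"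
  define u where "u x = (if x \<in> B then (if x \<in> V1 then s x else 0) else f x)" for x
  have disj1: "disjoint_family_on (\<lambda>wi. Q (fst wi) (snd wi)) I1"
    unfolding disjoint_family_on_def
  proof (intro ballI impI)
    fix a b assume ab: "a \<in> I1" "b \<in> I1" "a \<noteq> b"
    obtain w i where a: "a = (w, i)" "w \<in> V" "i < J w" using ab(1) unfolding I1_def by auto
    obtain w' i' where b: "b = (w', i')" "w' \<in> V" "i' < J w'" using ab(2) unfolding I1_def by auto
    show "Q (fst a) (snd a) \<inter> Q (fst b) (snd b) = {}"
    proof (cases "w = w'")
      case True
      hence "i \<noteq> i'" using a b ab by auto
      thus ?thesis using gw[OF a(2)] a b True unfolding good_def disjoint_family_on_def by auto
    next
      case False
      have "X w \<inter> X w' = {}" using False unfolding X_def by auto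
      thus ?thesis using Qs(2)[OF a(2,3)] Qs(2)[OF b(2,3)] a b by auto
    qed
  qed
  have disj: "disjoint_family_on P I"
    unfolding disjoint_family_on_def
  proof (intro ballI impI)
    fix a b assume ab: "a \<in> I" "b \<in> I" "a \<noteq> b"
    show "P a \<inter> P b = {}"
    proof (cases a)
      case (Inl a1)
      note a = this
      show ?thesis
      proof (cases b)
        case (Inl b1)
        have "a1 \<in> I1" "b1 \<in> I1" "a1 \<noteq> b1" using a Inl ab unfolding I_def by auto
        hence "Q (fst a1) (snd a1) \<inter> Q (fst b1) (snd b1) = {}"
          using disj1 unfolding disjoint_family_on_def by blast
        thus ?thesis using a Inl unfolding P_def by simp
      next
        case (Inr b1)
        have "P a \<subseteq> V1" using a ab unfolding P_def I_def V1_def by auto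
        moreover have "P b \<subseteq> D" using Inr ab Q's unfolding P_def I_def by auto
        ultimately show ?thesis unfolding D_def by auto
      qed
    next
      case (Inr a1)
      note a = this
      show ?thesis
      proof (cases b)
        case (Inl b1)
        have "P b \<subseteq> V1" using Inl ab unfolding P_def I_def V1_def by auto
        moreover have "P a \<subseteq> D" using a ab Q's unfolding P_def I_def by auto
        ultimately show ?thesis unfolding D_def by auto
      next
        case (Inr b1)
        have "a1 < J'" "b1 < J'" "a1 \<noteq> b1" using a Inr ab unfolding I_def by auto
        hence "Q' a1 \<inter> Q' b1 = {}" using gD unfolding good_def disjoint_family_on_def by blast
        thus ?thesis using a Inr unfolding P_def by simp
      qed
    qed
  qed
  have fI: "finite I" unfolding I_def using fI1 by auto
  have Ps0: "P i \<in> sets M \<and> P i \<subseteq> B \<and> emeasure M (P i) = ennreal p" if iI: "i \<in> I" for i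
  proof (cases i)
    case (Inl wi)
    obtain w j where wi: "wi = (w, j)" "w \<in> V" "j < J w" using iI Inl unfolding I_def I1_def by auto
    have "P i = Q w j" using Inl wi unfolding P_def by simp
    thus ?thesis using Qs[OF wi(2,3)] Xs(2)[of w] by auto
  next
    case (Inr j)
    have j: "j < J'" using iI Inr unfolding I_def by auto
    have "P i = Q' j" using Inr unfolding P_def by simp
    thus ?thesis using Q's[OF j] Ds(2) by auto
  qed
  have Ps: "P i \<in> sets M" "P i \<subseteq> B" "emeasure M (P i) = ennreal p" if "i \<in> I" for i
    using Ps0[OF that] by auto
  have UP: "(\<Union>i\<in>I. P i) = V1 \<union> (\<Union>i<J'. Q' i)"
    unfolding I_def P_def V1_def by auto
  have BR: "B - (\<Union>i\<in>I. P i) = R" unfolding UP R_def D_def by auto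
  have Q'U: "(\<Union>i<J'. Q' i) \<in> sets M" using Q's by (auto intro!: sets.finite_UN)
  have Rs: "R \<in> sets M" unfolding R_def using Ds Q'U by auto
  have mV1: "emeasure M V1 = of_nat (card I1) * ennreal p"
  proof -
    have "emeasure M V1 = (\<Sum>wi\<in>I1. emeasure M (Q (fst wi) (snd wi)))"
      unfolding V1_def using fI1 disj1 Qs by (intro sum_emeasure[symmetric]) (auto simp: I1_def)
    also have "\<dots> = (\<Sum>wi\<in>I1. ennreal p)" using Qs by (intro sum.cong) (auto simp: I1_def)
    finally show ?thesis by simp
  qed
  have mQ': "emeasure M (\<Union>i<J'. Q' i) = of_nat J' * ennreal p"
  proof -
    have "emeasure M (\<Union>i<J'. Q' i) = (\<Sum>i<J'. emeasure M (Q' i))"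
      using gD Q's unfolding good_def by (intro sum_emeasure[symmetric]) auto
    also have "\<dots> = (\<Sum>i<J'. ennreal p)" using Q's by (intro sum.cong) auto
    finally show ?thesis by simp
  qed
  have mD: "emeasure M D = of_nat J' * ennreal p + emeasure M R"
  proof -
    have "D = (\<Union>i<J'. Q' i) \<union> R" unfolding R_def using Q's by auto
    hence "emeasure M D = emeasure M (\<Union>i<J'. Q' i) + emeasure M R"
      using Q'U Rs by (simp add: plus_emeasure R_def)
    thus ?thesis using mQ' by simp
  qed
  have mBs: "emeasure M B = emeasure M V1 + emeasure M D"
  proof -
    have "B = V1 \<union> D" unfolding D_def using V1B by auto
    thus ?thesis using V1s Ds by (simp add: plus_emeasure D_def)
  qed
  have R0: "emeasure M R = 0"
  proof -
    have Rfin: "emeasure M R \<noteq> \<infinity>" using Rp by auto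
    define e where "e = measure M R"
    have eR: "emeasure M R = ennreal e" unfolding e_def using Rfin by (simp add: emeasure_eq_ennreal_measure)
    have "ennreal (real N * p) = ennreal (real (card I1 + J') * p + e)"
    proof -
      have "ennreal (real N * p) = emeasure M B" using mB p by (simp add: ennreal_of_nat_eq_real_of_nat ennreal_mult)
      also have "\<dots> = of_nat (card I1) * ennreal p + (of_nat J' * ennreal p + ennreal e)"
        using mBs mV1 mD eR by simp
      also have "\<dots> = ennreal (real (card I1) * p) + (ennreal (real J' * p) + ennreal e)"
        using p by (simp add: of_nat_ennreal_mult)
      also have "\<dots> = ennreal (real (card I1) * p + (real J' * p + e))"
        using p by (simp add: ennreal_plus e_def measure_nonneg)
      also have "real (card I1) * p + (real J' * p + e) = real (card I1 + J') * p + e"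
        by (simp add: algebra_simps)
      finally show ?thesis .
    qed
    hence "real N * p = real (card I1 + J') * p + e"
      using p by (subst (asm) ennreal_inj) (auto simp: e_def measure_nonneg)
    moreover have "e < p" using Rp eR p measure_nonneg[of M R] unfolding e_def by (simp add: ennreal_less_iff)
    ultimately have "e = 0" using ennreal_cancel_count[of N p "card I1 + J'" e] by (simp add: e_def measure_nonneg)
    thus ?thesis using eR by simp
  qed
  have Ine: "I \<noteq> {}"
  proof
    assume "I = {}"
    hence "R = B" using BR by simp
    thus False using R0 Bpos by simp
  qed
  have um: "u \<in> borel_measurable M"
    unfolding u_def using B V1s s f
    by (intro measurable_If_set) (auto intro!: measurable_If_set)
  have uv: "u x = v i" if iI: "i \<in> I" "x \<in> P i" for i x
  proof (cases i)
    case (Inl wi)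
    obtain w j where wi: "wi = (w, j)" "w \<in> V" "j < J w" using iI Inl unfolding I_def I1_def by auto
    have xQ: "x \<in> Q w j" using iI Inl wi unfolding P_def by auto
    hence "x \<in> X w" using Qs(2)[OF wi(2,3)] by auto
    hence "x \<in> B" "s x = w" unfolding X_def by auto
    moreover have "x \<in> V1" unfolding V1_def I1_def using wi xQ by force
    ultimately show ?thesis unfolding u_def v_def using Inl wi by simp
  next
    case (Inr j)
    have "j < J'" using that Inr unfolding I_def by auto
    hence "x \<in> D" using that Inr Q's unfolding P_def by auto
    thus ?thesis unfolding u_def v_def D_def using Inr by simp
  qed
  have rot: "\<rho> (TB M B u) \<le> \<rho> u"
    by (rule rotation_I[OF fI Ine B Ps(1) Ps(2) Ps(3) p disj _ um uv]) (use BR R0 in auto)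
  have BV1s: "B - V1 \<in> sets M" using B V1s by auto
  have "(\<integral>\<^sup>+x. s x * indicator B x \<partial>M) \<le> (\<integral>\<^sup>+x. u x * indicator B x + W * indicator (B - V1) x \<partial>M)"
  proof (rule nn_integral_mono)
    fix x assume x: "x \<in> space M"
    show "s x * indicator B x \<le> u x * indicator B x + W * indicator (B - V1) x"
    proof (cases "x \<in> B")
      case True
      show ?thesis
      proof (cases "x \<in> V1")
        case True thus ?thesis using \<open>x \<in> B\<close> unfolding u_def by simp
      next
        case False thus ?thesis using \<open>x \<in> B\<close> W[OF sV[OF \<open>x \<in> B\<close>]] unfolding u_def by simp
      qed
    qed simp
  qed
  also have "\<dots> = (\<integral>\<^sup>+x. u x * indicator B x \<partial>M) + W * emeasure M (B - V1)"
    using um B BV1s by (subst nn_integral_add) (auto simp: nn_integral_cmult_indicator)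
  also have "emeasure M (B - V1) \<le> of_nat (card V) * ennreal r"
  proof -
    have "B - V1 \<subseteq> (\<Union>w\<in>V. X w - (\<Union>i<J w. Q w i))"
    proof
      fix x assume x: "x \<in> B - V1"
      hence sx: "s x \<in> V" using sV by auto
      have "x \<in> X (s x)" using x Bsp unfolding X_def by auto
      moreover have "x \<notin> (\<Union>i<J (s x). Q (s x) i)" using x sx unfolding V1_def I1_def by force
      ultimately show "x \<in> (\<Union>w\<in>V. X w - (\<Union>i<J w. Q w i))" using sx by blast
    qed
    moreover have "(\<Union>w\<in>V. X w - (\<Union>i<J w. Q w i)) \<in> sets M"
      using V Xs Qs by (auto intro!: sets.finite_UN sets.Diff)
    ultimately have "emeasure M (B - V1) \<le> emeasure M (\<Union>w\<in>V. X w - (\<Union>i<J w. Q w i))"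
      by (rule emeasure_mono)
    also have "\<dots> \<le> (\<Sum>w\<in>V. emeasure M (X w - (\<Union>i<J w. Q w i)))"
      using V Xs Qs by (intro emeasure_subadditive_finite) (auto intro!: sets.finite_UN sets.Diff)
    also have "\<dots> \<le> (\<Sum>w\<in>V. ennreal r)"
      using gw unfolding good_def by (intro sum_mono) auto
    finally show ?thesis by simp
  qed
  hence "W * emeasure M (B - V1) \<le> W * of_nat (card V) * ennreal r"
    by (simp add: mult.assoc mult_left_mono)
  finally have int: "(\<integral>\<^sup>+x. s x * indicator B x \<partial>M) \<le> (\<integral>\<^sup>+x. u x * indicator B x \<partial>M) + W * of_nat (card V) * ennreal r"
    by (simp add: add_left_mono)
  have "\<forall>x\<in>space M. x \<notin> B \<longrightarrow> u x = f x" unfolding u_def by simp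
  moreover have "\<forall>x\<in>B. u x \<le> f x" unfolding u_def using sf by auto
  ultimately show ?thesis using um rot int by blast
qed

end



lemma enn_real_part: "x < top \<Longrightarrow> x = ennreal (enn2real x)"
  by simp

context rsetting begin

lemma single_block:
  assumes B: "B \<in> sets M" and Bpos: "0 < emeasure M B" and Bfin: "emeasure M B < \<infinity>"
    and split: "\<And>\<delta>. 0 < \<delta> \<Longrightarrow> \<exists>p N r. 0 < p \<and> emeasure M B = of_nat N * ennreal p \<and> 0 \<le> r \<and> r \<le> \<delta> \<and> SP M B p r"
    and h5: "\<exists>C. \<forall>f\<in>borel_measurable M. (\<integral>\<^sup>+x. f x * indicator B x \<partial>M) \<le> ennreal C * \<rho> f"
    and f: "f \<in> borel_measurable M"
  shows "\<rho> (TB M B f) \<le> \<rho> f"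
proof (cases "\<rho> f = \<infinity>")
  case True thus ?thesis by simp
next
  case False
  obtain C where C: "\<forall>f\<in>borel_measurable M. (\<integral>\<^sup>+x. f x * indicator B x \<partial>M) \<le> ennreal C * \<rho> f"
    using h5 by blast
  have If: "(\<integral>\<^sup>+x. f x * indicator B x \<partial>M) < \<infinity>"
  proof -
    have "ennreal C * \<rho> f < \<infinity>" using False by (simp add: ennreal_mult_less_top less_top)
    thus ?thesis using C f by (meson le_less_trans)
  qed
  define mB where "mB = measure M B"
  have mBe: "emeasure M B = ennreal mB" unfolding mB_def using Bfin by (simp add: emeasure_eq_ennreal_measure)
  have mBpos: "0 < mB" using Bpos mBe by simp
  define K where "K = \<rho> (indicator B)"
  have Kfin: "K < top" unfolding K_def using rho_ind[OF B Bfin] by simp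
  define K' where "K' = enn2real K"
  have KK': "K = ennreal K'" unfolding K'_def using Kfin by simp
  have K'0: "0 \<le> K'" unfolding K'_def by simp
  have TBm: "TB M B g \<in> borel_measurable M" if "g \<in> borel_measurable M" for g
    unfolding TB_def using that B by (intro measurable_If_set) auto
  have Bsp: "B \<subseteq> space M" using B sets.sets_into_space by blast
  have Bne: "B \<noteq> {}" using Bpos by auto
  show ?thesis
  proof (rule ennreal_le_epsilon)
    fix e :: real assume "\<rho> f < top" and e: "0 < e"
    define \<eta> where "\<eta> = e / (K' + 1)"
    have \<eta>: "0 < \<eta>" unfolding \<eta>_def using e K'0 by simp
    have \<eta>K: "ennreal \<eta> * K \<le> ennreal e"
    proof -
      have "\<eta> * K' \<le> e" unfolding \<eta>_def using e K'0 by (simp add: field_simps)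
      hence "ennreal (\<eta> * K') \<le> ennreal e" by (rule ennreal_leI)
      thus ?thesis unfolding KK' using \<eta> K'0 by (simp add: ennreal_mult[symmetric])
    qed
    obtain F where Fs: "\<And>i. simple_function M (F i)" and Finc: "incseq F"
      and Ftop: "\<And>i x. F i x < top" and Fsup: "\<And>x. (SUP i. F i x) = f x"
      using borel_measurable_implies_simple_function_sequence'[OF f] by blast
    define G where "G i x = F i x * indicator B x" for i x
    have Gm: "G i \<in> borel_measurable M" for i
      unfolding G_def using borel_measurable_simple_function[OF Fs[of i]] B by simp
    have Ginc: "incseq G"
      unfolding G_def incseq_def le_fun_def using Finc
      by (auto simp: incseq_def le_fun_def intro!: mult_right_mono)
    have Gsup: "(SUP i. G i x) = f x * indicator B x" for x
      unfolding G_def using Fsup[of x] by (cases "x \<in> B") auto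
    have Ieq: "(\<integral>\<^sup>+x. f x * indicator B x \<partial>M) = (SUP i. \<integral>\<^sup>+x. G i x \<partial>M)"
      using nn_integral_monotone_convergence_SUP[OF Ginc Gm] unfolding Gsup by simp
    have "\<exists>i\<in>UNIV. (\<integral>\<^sup>+x. f x * indicator B x \<partial>M) < (\<integral>\<^sup>+x. G i x \<partial>M) + ennreal (\<eta> * mB / 2)"
    proof (rule SUP_approx_ennreal)
      show "0 < \<eta> * mB / 2" using \<eta> mBpos by simp
      show "(\<integral>\<^sup>+x. f x * indicator B x \<partial>M) = (SUP i\<in>UNIV. \<integral>\<^sup>+x. G i x \<partial>M)" by (rule Ieq)
      show "(\<integral>\<^sup>+x. f x * indicator B x \<partial>M) \<noteq> \<infinity>" using If by simp
    qed simp
    then obtain i where i: "(\<integral>\<^sup>+x. f x * indicator B x \<partial>M) < (\<integral>\<^sup>+x. G i x \<partial>M) + ennreal (\<eta> * mB / 2)"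
      by blast
    define s where "s = F i"
    have sm: "s \<in> borel_measurable M" unfolding s_def using Fs by (rule borel_measurable_simple_function)
    have sf: "s x \<le> f x" for x unfolding s_def using Fsup[of x] by (metis SUP_upper UNIV_I)
    define V where "V = s ` space M"
    have fV: "finite V" unfolding V_def s_def using Fs by (rule simple_functionD(1))
    have sV: "s x \<in> V" if "x \<in> B" for x using that Bsp unfolding V_def by auto
    have Vne: "V \<noteq> {}" using Bne Bsp unfolding V_def by auto
    define W where "W = Max V"
    have WV: "W \<in> V" unfolding W_def using fV Vne by simp
    have Wge: "w \<le> W" if "w \<in> V" for w unfolding W_def using fV that by simp
    have Wfin: "W < top" using WV Ftop unfolding V_def s_def by auto
    define W' where "W' = enn2real W"
    have WW': "W = ennreal W'" unfolding W'_def using Wfin by simp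
    have W'0: "0 \<le> W'" unfolding W'_def by simp
    define \<delta> where "\<delta> = (\<eta> * mB / 2) / (W' * real (card V) + 1)"
    have \<delta>: "0 < \<delta>" unfolding \<delta>_def using \<eta> mBpos W'0 by (simp add: add_nonneg_pos)
    obtain p N r where pNr: "0 < p" "emeasure M B = of_nat N * ennreal p" "0 \<le> r" "r \<le> \<delta>" "SP M B p r"
      using split[OF \<delta>] by blast
    obtain u where u: "u \<in> borel_measurable M" "\<forall>x\<in>space M. x \<notin> B \<longrightarrow> u x = f x" "\<forall>x\<in>B. u x \<le> f x"
      "\<rho> (TB M B u) \<le> \<rho> u"
      "(\<integral>\<^sup>+x. s x * indicator B x \<partial>M) \<le> (\<integral>\<^sup>+x. u x * indicator B x \<partial>M) + W * of_nat (card V) * ennreal r"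
      using construct[OF B pNr(2) Bpos pNr(1) pNr(5) f sm fV sV sf Wge] by blast
    have err: "W * of_nat (card V) * ennreal r \<le> ennreal (\<eta> * mB / 2)"
    proof -
      have "W * of_nat (card V) * ennreal r = ennreal (W' * real (card V) * r)"
        unfolding WW' using W'0 pNr(3)
        by (simp add: ennreal_mult[symmetric] ennreal_of_nat_eq_real_of_nat)
      also have "W' * real (card V) * r \<le> W' * real (card V) * \<delta>"
        using pNr(4) W'0 by (intro mult_left_mono) auto
      also have "W' * real (card V) * \<delta> \<le> \<eta> * mB / 2"
      proof -
        define a where "a = W' * real (card V)"
        have a0: "0 \<le> a" unfolding a_def using W'0 by simp
        have "a * \<delta> = (a / (a + 1)) * (\<eta> * mB / 2)" unfolding \<delta>_def a_def by simp
        also have "\<dots> \<le> 1 * (\<eta> * mB / 2)"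
          using a0 \<eta> mBpos by (intro mult_right_mono) auto
        finally show ?thesis unfolding a_def by simp
      qed
      finally show ?thesis by (simp add: ennreal_leI)
    qed
    have Gi: "(\<integral>\<^sup>+x. G i x \<partial>M) = (\<integral>\<^sup>+x. s x * indicator B x \<partial>M)" unfolding G_def s_def ..
    have intb: "(\<integral>\<^sup>+x. f x * indicator B x \<partial>M) \<le> (\<integral>\<^sup>+x. u x * indicator B x \<partial>M) + ennreal (\<eta> * mB)"
    proof -
      have "(\<integral>\<^sup>+x. f x * indicator B x \<partial>M) \<le> (\<integral>\<^sup>+x. s x * indicator B x \<partial>M) + ennreal (\<eta> * mB / 2)"
        using i Gi by simp
      also have "\<dots> \<le> (\<integral>\<^sup>+x. u x * indicator B x \<partial>M) + W * of_nat (card V) * ennreal r + ennreal (\<eta> * mB / 2)"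
        using u(5) by (rule add_right_mono)
      also have "\<dots> \<le> (\<integral>\<^sup>+x. u x * indicator B x \<partial>M) + ennreal (\<eta> * mB / 2) + ennreal (\<eta> * mB / 2)"
        using err by (intro add_right_mono add_left_mono)
      also have "\<dots> = (\<integral>\<^sup>+x. u x * indicator B x \<partial>M) + (ennreal (\<eta> * mB / 2) + ennreal (\<eta> * mB / 2))"
        by (simp add: add.assoc)
      also have "ennreal (\<eta> * mB / 2) + ennreal (\<eta> * mB / 2) = ennreal (\<eta> * mB)"
        using \<eta> mBpos by (simp add: ennreal_plus[symmetric] del: ennreal_plus)
      finally show ?thesis .
    qed
    have avg: "avgB M B f \<le> avgB M B u + ennreal \<eta>"
    proof -
      have "avgB M B f = (\<integral>\<^sup>+x. f x * indicator B x \<partial>M) * ennreal (1 / mB)"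
        unfolding avgB_def mBe using mBpos by (rule div_ennreal_pos)
      also have "\<dots> \<le> ((\<integral>\<^sup>+x. u x * indicator B x \<partial>M) + ennreal (\<eta> * mB)) * ennreal (1 / mB)"
        using intb by (rule mult_right_mono) simp
      also have "\<dots> = (\<integral>\<^sup>+x. u x * indicator B x \<partial>M) * ennreal (1 / mB) + ennreal (\<eta> * mB) * ennreal (1 / mB)"
        by (simp add: distrib_right)
      also have "ennreal (\<eta> * mB) * ennreal (1 / mB) = ennreal \<eta>"
        using \<eta> mBpos by (simp add: ennreal_mult[symmetric])
      also have "(\<integral>\<^sup>+x. u x * indicator B x \<partial>M) * ennreal (1 / mB) = avgB M B u"
        unfolding avgB_def mBe using mBpos by (rule div_ennreal_pos[symmetric])
      finally show ?thesis .
    qed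
    have indm: "(\<lambda>x. ennreal \<eta> * indicator B x) \<in> borel_measurable M" using B by simp
    have ptw: "AE x in M. TB M B f x \<le> TB M B u x + ennreal \<eta> * indicator B x"
    proof (rule AE_I2)
      fix x assume x: "x \<in> space M"
      show "TB M B f x \<le> TB M B u x + ennreal \<eta> * indicator B x"
        using avg u(2) x unfolding TB_def by (cases "x \<in> B") auto
    qed
    have "\<rho> (TB M B f) \<le> \<rho> (\<lambda>x. TB M B u x + ennreal \<eta> * indicator B x)"
      using TBm[OF f] TBm[OF u(1)] indm ptw by (intro rho_mono) auto
    also have "\<dots> \<le> \<rho> (TB M B u) + \<rho> (\<lambda>x. ennreal \<eta> * indicator B x)"
      using TBm[OF u(1)] indm by (rule rho_tri)
    also have "\<rho> (\<lambda>x. ennreal \<eta> * indicator B x) = ennreal \<eta> * K"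
      unfolding K_def using B \<eta> by (intro rho_hom) auto
    also have "\<rho> (TB M B u) + ennreal \<eta> * K \<le> \<rho> u + ennreal e"
      using u(4) \<eta>K by (rule add_mono)
    also have "\<rho> u \<le> \<rho> f"
    proof (rule rho_mono[OF u(1) f])
      show "AE x in M. u x \<le> f x" using u(2,3) by (intro AE_I2) (metis order_refl)
    qed
    finally show "\<rho> (TB M B f) \<le> \<rho> f + ennreal e" by (simp add: add_right_mono)
  qed
qed

end



lemma na_pieces:
  assumes na: "non_atomic M" and p: "0 < p"
  shows "X \<in> sets M \<Longrightarrow> emeasure M X < \<infinity> \<Longrightarrow> real J * p \<le> measure M X \<Longrightarrow>
    \<exists>Q. (\<forall>i<J. Q i \<in> sets M \<and> Q i \<subseteq> X \<and> emeasure M (Q i) = ennreal p) \<and> disjoint_family_on Q {..<J}"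
proof (induction J arbitrary: X)
  case 0 thus ?case by (intro exI[of _ "\<lambda>_. {}"]) (auto simp: disjoint_family_on_def)
next
  case (Suc J)
  have "p \<le> measure M X" using Suc.prems p by (simp add: algebra_simps) (smt (verit) measure_nonneg mult_nonneg_nonneg of_nat_0_le_iff)
  then obtain Y where Y: "Y \<in> sets M" "Y \<subseteq> X" "measure M Y = p"
    using sierpinski[OF na Suc.prems(1,2), of p] p by auto
  have XY: "X - Y \<in> sets M" "emeasure M (X - Y) < \<infinity>" using Suc.prems Y fin_sub[OF Suc.prems(1,2), of "X - Y"] by auto
  have "measure M (X - Y) = measure M X - p"
    using Y Suc.prems by (subst measure_Diff) (auto simp: less_top)
  hence "real J * p \<le> measure M (X - Y)" using Suc.prems by (simp add: algebra_simps)
  then obtain Q where Q: "\<forall>i<J. Q i \<in> sets M \<and> Q i \<subseteq> X - Y \<and> emeasure M (Q i) = ennreal p"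
    "disjoint_family_on Q {..<J}" using Suc.IH[OF XY] by blast
  have Ye: "emeasure M Y = ennreal p"
    using Y fin_sub[OF Suc.prems(1,2) Y(1,2)] by (simp add: emeasure_eq_ennreal_measure less_top)
  define Q' where "Q' = Q(J := Y)"
  have "\<forall>i<Suc J. Q' i \<in> sets M \<and> Q' i \<subseteq> X \<and> emeasure M (Q' i) = ennreal p"
    unfolding Q'_def using Q Y Ye by (auto simp: less_Suc_eq)
  moreover have "disjoint_family_on Q' {..<Suc J}"
    unfolding disjoint_family_on_def
  proof (intro ballI impI)
    fix a b assume ab: "a \<in> {..<Suc J}" "b \<in> {..<Suc J}" "a \<noteq> b"
    show "Q' a \<inter> Q' b = {}"
    proof (cases "a = J")
      case True
      hence "b < J" using ab by auto
      thus ?thesis using True Q(1) ab unfolding Q'_def by auto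
    next
      case False
      hence a: "a < J" using ab by auto
      show ?thesis
      proof (cases "b = J")
        case True thus ?thesis using a Q(1) ab unfolding Q'_def by auto
      next
        case False
        hence "b < J" using ab by auto
        thus ?thesis using a Q(2) ab \<open>a \<noteq> J\<close> False unfolding Q'_def disjoint_family_on_def by auto
      qed
    qed
  qed
  ultimately show ?case by blast
qed

lemma SP_na:
  assumes na: "non_atomic M" and B: "B \<in> sets M" "emeasure M B < \<infinity>" and p: "0 < p"
  shows "SP M B p p"
  unfolding SP_def
proof (intro ballI impI)
  fix X assume X: "X \<in> sets M" "X \<subseteq> B"
  have Xf: "emeasure M X < \<infinity>" using fin_sub[OF B X] .
  define mX where "mX = measure M X"
  have mX0: "0 \<le> mX" unfolding mX_def by simp
  define J where "J = nat \<lfloor>mX / p\<rfloor>"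
  have J1: "real J \<le> mX / p" unfolding J_def using mX0 p by (simp add: of_nat_floor)
  have J2: "mX / p < real J + 1" unfolding J_def using mX0 p
    by (metis floor_divide_of_int_eq of_int_floor_cancel real_of_int_floor_add_one_gt of_nat_nat floor_le_zero
        nat_eq_iff2 not_le of_int_0 of_int_of_nat_eq zero_le_floor divide_nonneg_pos)
  have Jp: "real J * p \<le> mX" using J1 p by (simp add: field_simps)
  have Jp2: "mX < real J * p + p" using J2 p by (simp add: field_simps)
  obtain Q where Q: "\<forall>i<J. Q i \<in> sets M \<and> Q i \<subseteq> X \<and> emeasure M (Q i) = ennreal p" "disjoint_family_on Q {..<J}"
    using na_pieces[OF na p X(1) Xf Jp[unfolded mX_def]] by blast
  define U where "U = (\<Union>i<J. Q i)"
  have Us: "U \<in> sets M" "U \<subseteq> X" unfolding U_def using Q by auto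
  have mU: "emeasure M U = ennreal (real J * p)"
  proof -
    have "emeasure M U = (\<Sum>i<J. emeasure M (Q i))"
      unfolding U_def using Q by (intro sum_emeasure[symmetric]) auto
    also have "\<dots> = (\<Sum>i<J. ennreal p)" using Q by (intro sum.cong) auto
    finally show ?thesis using p by (simp add: of_nat_ennreal_mult)
  qed
  have "emeasure M (X - U) = emeasure M X - emeasure M U"
    using Us X mU by (intro emeasure_Diff) auto
  also have "\<dots> = ennreal (mX - real J * p)"
    unfolding mU mX_def using Xf p by (simp add: emeasure_eq_ennreal_measure less_top ennreal_minus)
  finally have eXU: "emeasure M (X - U) = ennreal (mX - real J * p)" .
  have "mX - real J * p < p" using Jp2 by simp
  hence "emeasure M (X - U) \<le> ennreal p \<and> emeasure M (X - U) < ennreal p"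
    unfolding eXU
  proof (intro conjI)
    show "ennreal (mX - real J * p) \<le> ennreal p" using \<open>mX - real J * p < p\<close> by (intro ennreal_leI) simp
    show "ennreal (mX - real J * p) < ennreal p" using \<open>mX - real J * p < p\<close> p by (intro ennreal_lessI) 
  qed
  hence c: "emeasure M (X - (\<Union>i<J. Q i)) \<le> ennreal p \<and> emeasure M (X - (\<Union>i<J. Q i)) < ennreal p"
    unfolding U_def .
  show "\<exists>J Q. (\<forall>i<J. Q i \<in> sets M \<and> Q i \<subseteq> X \<and> emeasure M (Q i) = ennreal p) \<and>
       disjoint_family_on Q {..<(J::nat)} \<and> emeasure M (X - (\<Union>i<J. Q i)) \<le> ennreal p \<and>
       emeasure M (X - (\<Union>i<J. Q i)) < ennreal p"
    apply (rule exI)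
    apply (rule exI)
    apply (intro conjI)
    apply (rule Q(1))
    apply (rule Q(2))
    apply (rule c[THEN conjunct1])
    apply (rule c[THEN conjunct2])
    done
qed

lemma split_na:
  assumes na: "non_atomic M" and B: "B \<in> sets M" "0 < emeasure M B" "emeasure M B < \<infinity>" and \<delta>: "0 < \<delta>"
  shows "\<exists>p N r. 0 < p \<and> emeasure M B = of_nat N * ennreal p \<and> 0 \<le> r \<and> r \<le> \<delta> \<and> SP M B p r"
proof -
  define mB where "mB = measure M B"
  have mBe: "emeasure M B = ennreal mB" unfolding mB_def using B by (simp add: emeasure_eq_ennreal_measure less_top)
  have mB0: "0 < mB" using B(2) mBe by simp
  define N where "N = nat \<lceil>mB / \<delta>\<rceil>"
  have N1: "mB / \<delta> \<le> real N" unfolding N_def by linarith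
  have Npos: "0 < real N" using N1 mB0 \<delta> by (smt (verit) divide_pos_pos)
  define p where "p = mB / real N"
  have p0: "0 < p" unfolding p_def using mB0 Npos by simp
  have pd: "p \<le> \<delta>" unfolding p_def using N1 Npos \<delta> by (simp add: field_simps)
  have "emeasure M B = of_nat N * ennreal p"
    unfolding mBe using p0 Npos by (simp add: of_nat_ennreal_mult p_def)
  thus ?thesis using p0 pd SP_na[OF na B(1,3) p0] by (intro exI[of _ p] exI[of _ N] exI[of _ p]) auto
qed




locale atomic =
  fixes M :: "'a measure" and \<A> :: "'a set set" and c :: ennreal
  assumes at: "\<And>A. A \<in> \<A> \<Longrightarrow> is_atom M A \<and> emeasure M A = c"
    and dj: "disjoint \<A>" and cov: "\<Union>\<A> = space M"
    and sf: "sigma_finite_measure M"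
begin

lemma atS: "A \<in> \<A> \<Longrightarrow> A \<in> sets M" using at unfolding is_atom_def by blast

lemma atom_int:
  assumes A: "A \<in> \<A>" and X: "X \<in> sets M"
  shows "emeasure M (A \<inter> X) = 0 \<or> emeasure M (A \<inter> X) = c"
proof -
  have AX: "A \<inter> X \<in> sets M" "A \<inter> X \<subseteq> A" using atS[OF A] X by auto
  have "emeasure M (A \<inter> X) = 0 \<or> emeasure M (A - A \<inter> X) = 0"
    using at[OF A] AX unfolding is_atom_def by blast
  moreover have "emeasure M (A - A \<inter> X) = 0 \<Longrightarrow> emeasure M (A \<inter> X) = c"
  proof -
    assume 0: "emeasure M (A - A \<inter> X) = 0"
    have "emeasure M A = emeasure M (A \<inter> X) + emeasure M (A - A \<inter> X)"
      using AX atS[OF A] by (subst plus_emeasure) (auto simp: Un_absorb1 Diff_partition)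
    thus ?thesis using 0 at[OF A] by simp
  qed
  ultimately show ?thesis by blast
qed

lemma fin_atoms:
  assumes F: "F \<in> sets M" "emeasure M F < \<infinity>"
  shows "finite {A\<in>\<A>. 0 < emeasure M (A \<inter> F)}"
proof (cases "{A\<in>\<A>. 0 < emeasure M (A \<inter> F)} = {}")
  case True show ?thesis by (subst True) simp
next
  case False
  define S where "S = {A\<in>\<A>. 0 < emeasure M (A \<inter> F)}"
  obtain A0 where A0: "A0 \<in> \<A>" "0 < emeasure M (A0 \<inter> F)" using False by blast
  have cA0: "emeasure M (A0 \<inter> F) = c" using atom_int[OF A0(1) F(1)] A0(2) by auto
  have cpos: "0 < c" using cA0 A0 by simp
  have cfin: "c < \<infinity>" using cA0 emeasure_mono[of "A0 \<inter> F" F M] F by auto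
  define cr where "cr = enn2real c"
  have ccr: "c = ennreal cr" unfolding cr_def using cfin by simp
  have cr0: "0 < cr" using cpos ccr by simp
  define mF where "mF = measure M F"
  have mFe: "emeasure M F = ennreal mF" unfolding mF_def using F by (simp add: emeasure_eq_ennreal_measure less_top)
  have "finite S \<and> card S \<le> nat \<lceil>mF / cr\<rceil>"
  proof (rule finite_if_finite_subsets_card_bdd)
    fix G assume G: "G \<subseteq> S" "finite G"
    have GS: "A \<in> \<A>" "emeasure M (A \<inter> F) = c" if AG: "A \<in> G" for A
    proof -
      have A: "A \<in> \<A>" "0 < emeasure M (A \<inter> F)" using G AG unfolding S_def by blast+
      thus "A \<in> \<A>" "emeasure M (A \<inter> F) = c" using atom_int[OF A(1) F(1)] by auto
    qed
    have "of_nat (card G) * c = (\<Sum>A\<in>G. emeasure M (A \<inter> F))" using GS by simp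
    also have "\<dots> = emeasure M (\<Union>A\<in>G. A \<inter> F)"
    proof (rule sum_emeasure)
      show "(\<lambda>A. A \<inter> F) ` G \<subseteq> sets M" using GS atS F by auto
      show "disjoint_family_on (\<lambda>A. A \<inter> F) G"
        using dj GS unfolding disjoint_family_on_def disjoint_def by blast
    qed (rule G(2))
    also have "\<dots> \<le> emeasure M F" using F by (intro emeasure_mono) auto
    finally have "of_nat (card G) * c \<le> emeasure M F" .
    hence "ennreal (real (card G) * cr) \<le> ennreal mF"
      unfolding ccr mFe using cr0 by (simp add: of_nat_ennreal_mult)
    hence "real (card G) * cr \<le> mF" using cr0 by (simp add: ennreal_le_iff measure_nonneg mF_def)
    hence "real (card G) \<le> mF / cr" using cr0 by (simp add: field_simps)
    thus "card G \<le> nat \<lceil>mF / cr\<rceil>" by linarith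
  qed
  thus ?thesis unfolding S_def by blast
qed

lemma countable_atoms: "countable \<A>"
proof -
  obtain \<F> where F: "countable \<F>" "\<F> \<subseteq> sets M" "\<Union>\<F> = space M" "\<forall>a\<in>\<F>. emeasure M a \<noteq> \<infinity>"
    using sigma_finite_measure.sigma_finite_countable[OF sf] by blast
  have sub: "\<A> \<subseteq> (\<Union>F\<in>\<F>. {A\<in>\<A>. 0 < emeasure M (A \<inter> F)})"
  proof
    fix A assume A: "A \<in> \<A>"
    show "A \<in> (\<Union>F\<in>\<F>. {A\<in>\<A>. 0 < emeasure M (A \<inter> F)})"
    proof (rule ccontr)
      assume "A \<notin> (\<Union>F\<in>\<F>. {A\<in>\<A>. 0 < emeasure M (A \<inter> F)})"
      hence z: "\<forall>F\<in>\<F>. emeasure M (A \<inter> F) = 0" using A by auto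
      have "A = (\<Union>F\<in>\<F>. A \<inter> F)" using F(3) A cov by auto
      moreover have "(\<Union>F\<in>\<F>. A \<inter> F) \<in> null_sets M"
        using z F atS[OF A] by (intro null_sets_UN') auto
      ultimately have "A \<in> null_sets M" by simp
      hence "emeasure M A = 0" by (rule null_setsD1)
      moreover have "0 < emeasure M A" using at[OF A] unfolding is_atom_def by blast
      ultimately show False by simp
    qed
  qed
  have "countable (\<Union>F\<in>\<F>. {A\<in>\<A>. 0 < emeasure M (A \<inter> F)})"
  proof (rule countable_UN[OF F(1)])
    fix F assume "F \<in> \<F>"
    hence "F \<in> sets M" "emeasure M F < \<infinity>" using \<open>\<F> \<subseteq> sets M\<close> \<open>\<forall>a\<in>\<F>. emeasure M a \<noteq> \<infinity>\<close>
      by (auto simp: less_top)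
    thus "countable {A\<in>\<A>. 0 < emeasure M (A \<inter> F)}" by (intro countable_finite fin_atoms)
  qed
  thus ?thesis using sub countable_subset by blast
qed

lemma SP_atomic:
  assumes B: "B \<in> sets M" "emeasure M B < \<infinity>" and cc: "c = ennreal p" "0 < p"
  shows "SP M B p 0"
  unfolding SP_def
proof (intro ballI impI)
  fix X assume X: "X \<in> sets M" "X \<subseteq> B"
  have Xf: "emeasure M X < \<infinity>" using fin_sub[OF B X] .
  define S where "S = {A\<in>\<A>. 0 < emeasure M (A \<inter> X)}"
  have fS: "finite S" unfolding S_def using fin_atoms[OF X(1) Xf] .
  obtain e where e: "bij_betw e {0..<card S} S" using ex_bij_betw_nat_finite[OF fS] by blast
  define J where "J = card S"
  define Q where "Q i = e i \<inter> X" for i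
  have eS: "e i \<in> S" if "i < J" for i using bij_betw_apply[OF e] that unfolding J_def by auto
  have img: "e ` {..<J} = S" using bij_betw_imp_surj_on[OF e] unfolding J_def lessThan_atLeast0 .
  have inj: "inj_on e {..<J}" using bij_betw_imp_inj_on[OF e] unfolding J_def lessThan_atLeast0 .
  have Qp: "Q i \<in> sets M \<and> Q i \<subseteq> X \<and> emeasure M (Q i) = ennreal p" if "i < J" for i
  proof -
    have A: "e i \<in> \<A>" "0 < emeasure M (e i \<inter> X)" using eS[OF that] unfolding S_def by auto
    hence "emeasure M (e i \<inter> X) = c" using atom_int[OF A(1) X(1)] by auto
    thus ?thesis unfolding Q_def using atS[OF A(1)] X cc by auto
  qed
  have disjQ: "disjoint_family_on Q {..<J}"
    unfolding disjoint_family_on_def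
  proof (intro ballI impI)
    fix a b assume ab: "a \<in> {..<J}" "b \<in> {..<J}" "a \<noteq> b"
    hence "e a \<noteq> e b" using inj unfolding inj_on_def by blast
    moreover have "e a \<in> \<A>" "e b \<in> \<A>" using eS ab unfolding S_def by auto
    ultimately have "e a \<inter> e b = {}" using dj unfolding disjoint_def by blast
    thus "Q a \<inter> Q b = {}" unfolding Q_def by auto
  qed
  have UQ: "(\<Union>i<J. Q i) = (\<Union>A\<in>S. A \<inter> X)" unfolding Q_def using img by auto
  have sub: "X - (\<Union>i<J. Q i) \<subseteq> (\<Union>A\<in>\<A> - S. A \<inter> X)"
  proof
    fix x assume x: "x \<in> X - (\<Union>i<J. Q i)"
    hence "x \<in> space M" using sets.sets_into_space[OF X(1)] by auto
    then obtain A where A: "A \<in> \<A>" "x \<in> A" using cov by auto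
    have "A \<notin> S" using x A unfolding UQ by auto
    thus "x \<in> (\<Union>A\<in>\<A> - S. A \<inter> X)" using A x by auto
  qed
  have nul: "(\<Union>A\<in>\<A> - S. A \<inter> X) \<in> null_sets M"
  proof (rule null_sets_UN')
    show "countable (\<A> - S)" using countable_atoms by (rule countable_Diff)
    fix A assume A: "A \<in> \<A> - S"
    have "emeasure M (A \<inter> X) = 0" using A unfolding S_def by (simp add: not_less)
    moreover have "A \<inter> X \<in> sets M" using atS A X by blast
    ultimately show "A \<inter> X \<in> null_sets M" by (rule null_setsI)
  qed
  have ss: "X - (\<Union>i<J. Q i) \<in> sets M"
  proof (rule sets.Diff[OF X(1)])
    show "(\<Union>i<J. Q i) \<in> sets M"
    proof (rule sets.finite_UN)
      fix i assume "i \<in> {..<J}"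
      thus "Q i \<in> sets M" using Qp by blast
    qed simp
  qed
  have "X - (\<Union>i<J. Q i) \<in> null_sets M"
    by (rule null_sets_subset[OF nul ss sub])
  hence rem: "emeasure M (X - (\<Union>i<J. Q i)) = 0" by (rule null_setsD1)
  show "\<exists>J Q. (\<forall>i<J. Q i \<in> sets M \<and> Q i \<subseteq> X \<and> emeasure M (Q i) = ennreal p) \<and>
       disjoint_family_on Q {..<(J::nat)} \<and> emeasure M (X - (\<Union>i<J. Q i)) \<le> ennreal 0 \<and>
       emeasure M (X - (\<Union>i<J. Q i)) < ennreal p"
    apply (rule exI[where x=J])
    apply (rule exI[where x=Q])
    apply (intro conjI allI impI)
    using Qp disjQ rem cc(2) by simp_all
qed

lemma split_at:
  assumes B: "B \<in> sets M" "0 < emeasure M B" "emeasure M B < \<infinity>"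
  shows "\<exists>p N. 0 < p \<and> emeasure M B = of_nat N * ennreal p \<and> SP M B p 0"
proof -
  define S where "S = {A\<in>\<A>. 0 < emeasure M (A \<inter> B)}"
  have "S \<noteq> {}"
  proof
    assume S: "S = {}"
    have sub: "B \<subseteq> (\<Union>A\<in>\<A>. A \<inter> B)"
    proof
      fix x assume x: "x \<in> B"
      hence "x \<in> space M" using sets.sets_into_space[OF B(1)] by auto
      then obtain A where "A \<in> \<A>" "x \<in> A" using cov by auto
      thus "x \<in> (\<Union>A\<in>\<A>. A \<inter> B)" using x by auto
    qed
    have nul: "(\<Union>A\<in>\<A>. A \<inter> B) \<in> null_sets M"
    proof (rule null_sets_UN')
      show "countable \<A>" by (rule countable_atoms)
      fix A assume A: "A \<in> \<A>"
      have "A \<notin> S" using S by simp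
      hence "emeasure M (A \<inter> B) = 0" using A unfolding S_def by (simp add: not_less)
      moreover have "A \<inter> B \<in> sets M" using atS A B by blast
      ultimately show "A \<inter> B \<in> null_sets M" by (rule null_setsI)
    qed
    have "B \<in> null_sets M" by (rule null_sets_subset[OF nul B(1) sub])
    hence "emeasure M B = 0" by (rule null_setsD1)
    thus False using B(2) by simp
  qed
  then obtain A0 where A0: "A0 \<in> \<A>" "0 < emeasure M (A0 \<inter> B)" unfolding S_def by blast
  have cA0: "emeasure M (A0 \<inter> B) = c" using atom_int[OF A0(1) B(1)] A0(2) by auto
  have cpos: "0 < c" using cA0 A0 by simp
  have cfin: "c < \<infinity>" using cA0 emeasure_mono[of "A0 \<inter> B" B M] B by auto
  define p where "p = enn2real c"
  have cp: "c = ennreal p" unfolding p_def using cfin by simp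
  have p0: "0 < p" using cpos cp by simp
  have sp: "SP M B p 0" by (rule SP_atomic[OF B(1,3) cp p0])
  then obtain J Q where JQ: "\<forall>i<J. Q i \<in> sets M \<and> Q i \<subseteq> B \<and> emeasure M (Q i) = ennreal p"
    "disjoint_family_on Q {..<(J::nat)}" "emeasure M (B - (\<Union>i<J. Q i)) \<le> ennreal 0"
    unfolding SP_def using B(1) by blast
  have Us: "(\<Union>i<J. Q i) \<in> sets M"
  proof (rule sets.finite_UN)
    fix i assume "i \<in> {..<J}"
    thus "Q i \<in> sets M" using JQ(1) by blast
  qed simp
  have UB: "(\<Union>i<J. Q i) \<subseteq> B" using JQ(1) by blast
  have "emeasure M B = emeasure M ((\<Union>i<J. Q i) \<union> (B - (\<Union>i<J. Q i)))"
    using UB by (simp add: Un_absorb1)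
  also have "\<dots> = emeasure M (\<Union>i<J. Q i) + emeasure M (B - (\<Union>i<J. Q i))"
    using Us B(1) by (intro plus_emeasure[symmetric]) auto
  also have "emeasure M (B - (\<Union>i<J. Q i)) = 0" using JQ(3) by simp
  also have "emeasure M (\<Union>i<J. Q i) = (\<Sum>i<J. emeasure M (Q i))"
    using JQ(1,2) by (intro sum_emeasure[symmetric]) auto
  also have "\<dots> = (\<Sum>i<J. ennreal p)" using JQ(1) by (intro sum.cong) auto
  finally have "emeasure M B = of_nat J * ennreal p" by simp
  thus ?thesis using p0 sp by blast
qed

end




definition Tset :: "'a measure \<Rightarrow> 'a set set \<Rightarrow> ('a \<Rightarrow> ennreal) \<Rightarrow> 'a \<Rightarrow> ennreal" where
  "Tset M \<B> f x = f x * indicator (space M - \<Union>\<B>) x + (\<Sum>B\<in>\<B>. avgB M B f * indicator B x)"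

context rsetting begin

lemma Tset_meas:
  assumes "finite \<B>" "\<B> \<subseteq> sets M" "f \<in> borel_measurable M"
  shows "Tset M \<B> f \<in> borel_measurable M"
proof -
  have "space M - \<Union>\<B> \<in> sets M" using assms by auto
  moreover have "(\<lambda>x. \<Sum>B\<in>\<B>. avgB M B f * indicator B x) \<in> borel_measurable M"
    using assms by (intro borel_measurable_sum) auto
  ultimately show ?thesis unfolding Tset_def using assms(3) by simp
qed

lemma multi_block:
  assumes fin: "finite \<B>" and sub: "\<B> \<subseteq> sets M" and dj: "disjoint \<B>"
    and blk: "\<And>B g. B \<in> \<B> \<Longrightarrow> g \<in> borel_measurable M \<Longrightarrow> \<rho> (TB M B g) \<le> \<rho> g"
  shows "f \<in> borel_measurable M \<Longrightarrow> \<rho> (Tset M \<B> f) \<le> \<rho> f"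
  using fin sub dj blk
proof (induction \<B> arbitrary: f rule: finite_induct)
  case empty
  have "\<rho> (Tset M {} f) = \<rho> f"
  proof (rule rho_ae[OF Tset_meas[OF _ _ empty.prems(1)] empty.prems(1)])
    show "AE x in M. Tset M {} f x = f x" by (intro AE_I2) (simp add: Tset_def)
  qed auto
  thus ?case by simp
next
  case (insert B \<B>)
  have djB: "disjoint \<B>" using insert.prems(3) unfolding disjoint_def by blast
  have Bdj: "B \<inter> C = {}" if "C \<in> \<B>" for C
    using insert.prems(3) insert.hyps(2) that unfolding disjoint_def by auto
  have Bs: "B \<in> sets M" using insert.prems(2) by auto
  have fm: "f \<in> borel_measurable M" by (rule insert.prems(1))
  have Tm: "Tset M \<B> f \<in> borel_measurable M" using Tset_meas[OF insert.hyps(1) _ fm] insert.prems(2) by auto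
  have avg_eq: "avgB M B (Tset M \<B> f) = avgB M B f"
  proof -
    have "(\<lambda>y. Tset M \<B> f y * indicator B y) = (\<lambda>y. f y * indicator B y)"
    proof
      fix y show "Tset M \<B> f y * indicator B y = f y * indicator B y"
      proof (cases "y \<in> B")
        case True
        hence "y \<notin> \<Union>\<B>" using Bdj by auto
        hence "(\<Sum>C\<in>\<B>. avgB M C f * indicator C y) = 0" by (auto simp: indicator_def)
        moreover have "y \<in> space M" using True Bs sets.sets_into_space by blast
        ultimately show ?thesis unfolding Tset_def using True \<open>y \<notin> \<Union>\<B>\<close> by simp
      qed simp
    qed
    thus ?thesis unfolding avgB_def by simp
  qed
  have eq: "AE x in M. Tset M (insert B \<B>) f x = TB M B (Tset M \<B> f) x"
  proof (rule AE_I2)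
    fix x assume x: "x \<in> space M"
    show "Tset M (insert B \<B>) f x = TB M B (Tset M \<B> f) x"
    proof (cases "x \<in> B")
      case True
      hence xn: "x \<notin> \<Union>\<B>" using Bdj by auto
      have "(\<Sum>C\<in>insert B \<B>. avgB M C f * indicator C x) = avgB M B f * indicator B x + (\<Sum>C\<in>\<B>. avgB M C f * indicator C x)"
        using insert.hyps by (rule sum.insert)
      also have "avgB M B f * indicator B x = avgB M B f" using True by simp
      also have "(\<Sum>C\<in>\<B>. avgB M C f * indicator C x) = 0" using xn by (auto simp: indicator_def)
      finally have "Tset M (insert B \<B>) f x = avgB M B f" unfolding Tset_def using True by simp
      moreover have "TB M B (Tset M \<B> f) x = avgB M B f" unfolding TB_def using True avg_eq by simp
      ultimately show ?thesis by simp
    next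
      case False
      have "(\<Sum>C\<in>insert B \<B>. avgB M C f * indicator C x) = avgB M B f * indicator B x + (\<Sum>C\<in>\<B>. avgB M C f * indicator C x)"
        using insert.hyps by (rule sum.insert)
      hence "(\<Sum>C\<in>insert B \<B>. avgB M C f * indicator C x) = (\<Sum>C\<in>\<B>. avgB M C f * indicator C x)"
        using False by simp
      moreover have "indicator (space M - \<Union>(insert B \<B>)) x = (indicator (space M - \<Union>\<B>) x :: ennreal)"
        using False by (simp add: indicator_def)
      ultimately show ?thesis unfolding Tset_def TB_def using False by simp
    qed
  qed
  have TBm: "TB M B (Tset M \<B> f) \<in> borel_measurable M"
    unfolding TB_def using Tm Bs by (intro measurable_If_set) auto
  have "\<rho> (Tset M (insert B \<B>) f) = \<rho> (TB M B (Tset M \<B> f))"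
    by (rule rho_ae[OF Tset_meas[OF _ _ fm] TBm eq]) (use insert.hyps insert.prems in auto)
  also have "\<dots> \<le> \<rho> (Tset M \<B> f)" using insert.prems(4)[OF _ Tm] by simp
  also have "\<dots> \<le> \<rho> f" using insert.IH[OF fm _ djB] insert.prems by auto
  finally show ?case .
qed

end



lemma fin_atom_in:
  assumes fs: "finite_sub_sigma M S" and x: "x \<in> space M"
  shows "fin_atom S x \<in> S"
proof -
  interpret sa: sigma_algebra "space M" S using fs unfolding finite_sub_sigma_def by blast
  have fin: "finite {A \<in> S. x \<in> A}" using fs unfolding finite_sub_sigma_def by auto
  have ne: "{A \<in> S. x \<in> A} \<noteq> {}" using x sa.top by blast
  have "(\<Inter>A\<in>{A \<in> S. x \<in> A}. A) \<in> S" by (rule sa.finite_INT[OF fin ne]) auto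
  thus ?thesis unfolding fin_atom_def by simp
qed

lemma fin_atom_mem: "x \<in> fin_atom S x"
  unfolding fin_atom_def by auto

lemma fin_atom_eq:
  assumes fs: "finite_sub_sigma M S" and x: "x \<in> space M" and y: "y \<in> fin_atom S x"
  shows "fin_atom S y = fin_atom S x"
proof -
  interpret sa: sigma_algebra "space M" S using fs unfolding finite_sub_sigma_def by blast
  have ax: "fin_atom S x \<in> S" by (rule fin_atom_in[OF fs x])
  have "fin_atom S y \<subseteq> fin_atom S x" using ax y unfolding fin_atom_def by auto
  moreover have "fin_atom S x \<subseteq> fin_atom S y"
    unfolding fin_atom_def[of S y]
  proof (rule Inter_greatest)
    fix A assume A: "A \<in> {A \<in> S. y \<in> A}"
    show "fin_atom S x \<subseteq> A"
    proof (cases "x \<in> A")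
      case True thus ?thesis using A unfolding fin_atom_def by auto
    next
      case False
      hence "space M - A \<in> {A \<in> S. x \<in> A}" using A x sa.compl_sets by auto
      hence "fin_atom S x \<subseteq> space M - A" unfolding fin_atom_def by auto
      thus ?thesis using y A by auto
    qed
  qed
  ultimately show ?thesis by blast
qed

theorem theorem3p47:
  fixes M :: "'a measure" and \<rho> :: "('a \<Rightarrow> ennreal) \<Rightarrow> ennreal"
  assumes "sigma_finite_measure M"
    and "resonant M"
    and "function_norm M \<rho>"
    and "rearrangement_invariant M \<rho>"
    and "\<forall>E\<in>sets M. emeasure M E < \<infinity> \<longrightarrow>
           (\<exists>C::real. \<forall>f\<in>borel_measurable M.
              (\<integral>\<^sup>+ x. f x * indicator E x \<partial>M) \<le> ennreal C * \<rho> f)"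
  shows "leveling M \<rho>"
proof -
  interpret rsetting M \<rho> using assms(3,4) by unfold_locales
  have split: "\<exists>p N r. 0 < p \<and> emeasure M B = of_nat N * ennreal p \<and> 0 \<le> r \<and> r \<le> \<delta> \<and> SP M B p r"
    if B: "B \<in> sets M" "0 < emeasure M B" "emeasure M B < \<infinity>" and d: "0 < \<delta>" for B \<delta>
  proof (cases "non_atomic M")
    case True thus ?thesis using split_na[OF True B d] by blast
  next
    case False
    hence "atoms_equal_measure M" using assms(2) unfolding resonant_def by blast
    then obtain \<A> c where Ac: "\<forall>A\<in>\<A>. is_atom M A \<and> emeasure M A = c" "disjoint \<A>" "\<Union>\<A> = space M"
      unfolding atoms_equal_measure_def by blast
    have "atomic M \<A> c"
    proof
      show "\<And>A. A \<in> \<A> \<Longrightarrow> is_atom M A \<and> emeasure M A = c" using Ac(1) by blast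
      show "disjoint \<A>" by (rule Ac(2))
      show "\<Union>\<A> = space M" by (rule Ac(3))
    qed (use assms(1) in \<open>simp add: sigma_finite_measure_def\<close>)
    then interpret atomic M \<A> c .
    obtain p N where pN: "0 < p" "emeasure M B = of_nat N * ennreal p" "SP M B p 0"
      using split_at[OF B] by blast
    have "0 \<le> (0::real)" "(0::real) \<le> \<delta>" using d by auto
    thus ?thesis using pN by blast
  qed
  have sb: "\<rho> (TB M B g) \<le> \<rho> g"
    if B: "B \<in> sets M" "0 < emeasure M B" "emeasure M B < \<infinity>" and g: "g \<in> borel_measurable M" for B g
  proof (rule single_block[OF B _ _ g])
    show "\<And>\<delta>. 0 < \<delta> \<Longrightarrow> \<exists>p N r. 0 < p \<and> emeasure M B = of_nat N * ennreal p \<and> 0 \<le> r \<and> r \<le> \<delta> \<and> SP M B p r"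
      using split[OF B] by blast
    show "\<exists>C. \<forall>f\<in>borel_measurable M. (\<integral>\<^sup>+x. f x * indicator B x \<partial>M) \<le> ennreal C * \<rho> f"
      using assms(5)[rule_format, OF B(1) B(3)] .
  qed
  show ?thesis
    unfolding leveling_def
  proof (intro exI[of _ 1] allI impI ballI)
    fix S and f :: "'a \<Rightarrow> ennreal" assume fs: "finite_sub_sigma M S" and f: "f \<in> borel_measurable M"
    have SM: "S \<subseteq> sets M" "finite S" using fs unfolding finite_sub_sigma_def by auto
    define \<B> where "\<B> = {A \<in> fin_atom S ` space M. 0 < emeasure M A \<and> emeasure M A < \<infinity>}"
    have BS: "\<B> \<subseteq> S"
    proof
      fix A assume "A \<in> \<B>"
      then obtain x where x: "x \<in> space M" "A = fin_atom S x" unfolding \<B>_def by blast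
      have "fin_atom S x \<in> S" by (rule fin_atom_in[OF fs x(1)])
      thus "A \<in> S" by (simp only: x(2))
    qed
    have finB: "finite \<B>" using BS SM finite_subset by blast
    have subB: "\<B> \<subseteq> sets M" using BS SM by auto
    have djB: "disjoint \<B>"
      unfolding disjoint_def
    proof (intro ballI impI)
      fix A1 A2 assume A: "A1 \<in> \<B>" "A2 \<in> \<B>" "A1 \<noteq> A2"
      obtain x where x: "x \<in> space M" "A1 = fin_atom S x" using A(1) unfolding \<B>_def by blast
      obtain y where y: "y \<in> space M" "A2 = fin_atom S y" using A(2) unfolding \<B>_def by blast
      show "A1 \<inter> A2 = {}"
      proof (rule ccontr)
        assume "A1 \<inter> A2 \<noteq> {}"
        then obtain z where z: "z \<in> A1" "z \<in> A2" by blast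
        have z1: "z \<in> fin_atom S x" using z(1) x(2) by (simp only:)
        have z2: "z \<in> fin_atom S y" using z(2) y(2) by (simp only:)
        have "A1 = A2" using fin_atom_eq[OF fs x(1) z1] fin_atom_eq[OF fs y(1) z2] x(2) y(2) by (simp only:)
        thus False using A(3) by (simp only:)
      qed
    qed
    have blk: "\<rho> (TB M B g) \<le> \<rho> g" if "B \<in> \<B>" "g \<in> borel_measurable M" for B g
    proof -
      have "B \<in> sets M" using that(1) subB by blast
      moreover have "0 < emeasure M B" "emeasure M B < \<infinity>" using that(1) unfolding \<B>_def by blast+
      ultimately show ?thesis using sb[OF _ _ _ that(2)] by blast
    qed
    have T: "\<rho> (Tset M \<B> f) \<le> \<rho> f" by (rule multi_block[OF finB subB djB blk f])
    define h where "h x = (\<Sum>B\<in>\<B>. avgB M B f * indicator B x)" for x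
    have hm: "h \<in> borel_measurable M" unfolding h_def using subB by (intro borel_measurable_sum) auto
    have ceq: "cond_exp_fin M S f x = h x" if x: "x \<in> space M" for x
    proof (cases "fin_atom S x \<in> \<B>")
      case True
      have "h x = avgB M (fin_atom S x) f"
      proof -
        have "h x = (\<Sum>B\<in>\<B>. if B = fin_atom S x then avgB M B f else 0)"
          unfolding h_def
        proof (rule sum.cong)
          fix B assume B: "B \<in> \<B>"
          show "avgB M B f * indicator B x = (if B = fin_atom S x then avgB M B f else 0)"
          proof (cases "x \<in> B")
            case True
            obtain y where y: "y \<in> space M" "B = fin_atom S y" using B unfolding \<B>_def by auto
            have "fin_atom S x = B" using fin_atom_eq[OF fs y(1)] True y by auto
            thus ?thesis using True by simp
          next
            case False
            hence "B \<noteq> fin_atom S x" using fin_atom_mem[of x S] by auto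
            thus ?thesis using False by simp
          qed
        qed simp
        also have "\<dots> = avgB M (fin_atom S x) f" using True finB by simp
        finally show ?thesis .
      qed
      moreover have "0 < emeasure M (fin_atom S x) \<and> emeasure M (fin_atom S x) < \<infinity>"
        using True unfolding \<B>_def by auto
      ultimately show ?thesis unfolding cond_exp_fin_def avgB_def Let_def by simp
    next
      case False
      have hx: "h x = 0"
        unfolding h_def
      proof (rule sum.neutral, rule ballI)
        fix B assume B: "B \<in> \<B>"
        obtain y where y: "y \<in> space M" "B = fin_atom S y" using B unfolding \<B>_def by auto
        have "x \<notin> B"
        proof
          assume "x \<in> B"
          hence "fin_atom S x = B" using fin_atom_eq[OF fs y(1)] y by auto
          thus False using False B by simp
        qed
        thus "avgB M B f * indicator B x = 0" by simp
      qed
      have nb: "\<not> (0 < emeasure M (fin_atom S x) \<and> emeasure M (fin_atom S x) < \<infinity>)"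
        using False x unfolding \<B>_def by blast
      have "cond_exp_fin M S f x = 0" unfolding cond_exp_fin_def Let_def using nb by (rule if_not_P)
      thus ?thesis using hx by simp
    qed
    have cm: "cond_exp_fin M S f \<in> borel_measurable M"
      using hm measurable_cong[of M "cond_exp_fin M S f" h] ceq by simp
    have Tm: "Tset M \<B> f \<in> borel_measurable M" by (rule Tset_meas[OF finB subB f])
    have "\<rho> (cond_exp_fin M S f) \<le> \<rho> (Tset M \<B> f)"
    proof (rule rho_mono[OF cm Tm], rule AE_I2)
      fix x assume "x \<in> space M"
      thus "cond_exp_fin M S f x \<le> Tset M \<B> f x" using ceq unfolding Tset_def h_def by simp
    qed
    also note T
    finally show "\<rho> (cond_exp_fin M S f) \<le> ennreal 1 * \<rho> f" by simp
  qed
qed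


end
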